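(* For every $n\ge1$, $$\sum_{\sigma\in S_n} q^{\,\mathrm{run}(\sigma)-1+2\,\mathrm{lsg}(\sigma)+\mathrm{rsg}(\sigma)}=[n]_q!,$$ where $\mathrm{lsg}(\sigma)=\sum_{i=1}^n\mathrm{lsg}(i)$ and $\mathrm{rsg}(\sigma)=\sum_{i=1}^n\mathrm{rsg}(i)$.
   Context: $[n]_q=\frac{1-q^n}{1-q}$ and $[n]_q!=[n]_q\cdots[1]_q$. A permutation $\sigma\in S_n$ is written as the word $\sigma(1)\cdots\sigma(n)$; its runs are the maximal contiguous increasing segments of this word, and $\mathrm{run}(\sigma)$ is the number of runs. For $i\in\{1,\dots,n\}$, $\mathrm{lsg}(i)$ is the number of runs of $\sigma$ lying strictly to the left of $i$ (not containing $i$) that contain both an element smaller than $i$ and an element greater than $i$; $\mathrm{rsg}(i)$ is the analogous number of runs strictly to the right of $i$. *)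

theory Defs
  imports "HOL-Combinatorics.Combinatorics"
begin

(* q-integer [n]_q = (1-q^n)/(1-q), written as the polynomial 1 + q + ... + q^(n-1) *)
definition qint :: "'a::comm_ring_1 \<Rightarrow> nat \<Rightarrow> 'a" where
  "qint q n = (\<Sum>j<n. q ^ j)"

definition qfact :: "'a::comm_ring_1 \<Rightarrow> nat \<Rightarrow> 'a" where
  "qfact q n = (\<Prod>k\<in>{1..n}. qint q k)"

fun runs :: "nat list \<Rightarrow> nat list list" where
  "runs [] = []"
| "runs [x] = [[x]]"
| "runs (x # y # xs) = (let r = runs (y # xs) in
      if x < y then (x # hd r) # tl r else [x] # r)"

definition run :: "nat list \<Rightarrow> nat" where
  "run w = length (runs w)"

definition run_idx :: "nat list \<Rightarrow> nat \<Rightarrow> nat" where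
  "run_idx w i = (THE k. k < length (runs w) \<and> i \<in> set (runs w ! k))"

definition straddles :: "nat list \<Rightarrow> nat \<Rightarrow> nat \<Rightarrow> bool" where
  "straddles w k i = ((\<exists>a\<in>set (runs w ! k). a < i) \<and> (\<exists>b\<in>set (runs w ! k). i < b))"

definition lsg_at :: "nat list \<Rightarrow> nat \<Rightarrow> nat" where
  "lsg_at w i = card {k. k < run_idx w i \<and> straddles w k i}"

definition rsg_at :: "nat list \<Rightarrow> nat \<Rightarrow> nat" where
  "rsg_at w i = card {k. run_idx w i < k \<and> k < length (runs w) \<and> straddles w k i}"

definition lsg :: "nat list \<Rightarrow> nat" where
  "lsg w = (\<Sum>i\<in>set w. lsg_at w i)"

definition rsg :: "nat list \<Rightarrow> nat" where
  "rsg w = (\<Sum>i\<in>set w. rsg_at w i)"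

end

theory Submission
  imports Defs
begin


lemma qint_0[simp]: "qint q 0 = 0" by (simp add: qint_def)
lemma qint_Suc: "qint q (Suc n) = qint q n + q ^ n" by (simp add: qint_def)
lemma qint_1[simp]: "qint q (Suc 0) = 1" by (simp add: qint_def)
lemma qint_add: "qint q (a + b) = qint q a + q ^ a * qint q b"
proof (induction b)
  case 0 then show ?case by simp
next
  case (Suc b) then show ?case by (simp add: qint_Suc algebra_simps power_add)
qed
lemma qint_Suc': "qint q (Suc n) = 1 + q * qint q n"
  using qint_add[of q 1 n] by (simp add: qint_def)

lemma qfact_Suc: "qfact q (Suc n) = qint q (Suc n) * qfact q n"
  unfolding qfact_def by (simp add: atLeastAtMostSuc_conv mult.commute)
lemma qfact_0[simp]: "qfact q 0 = 1" unfolding qfact_def by simp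

fun qb :: "'a::comm_ring_1 \<Rightarrow> nat \<Rightarrow> nat \<Rightarrow> 'a" where
  "qb q 0 k = (if k = 0 then 1 else 0)"
| "qb q (Suc n) 0 = 1"
| "qb q (Suc n) (Suc k) = qb q n k + q ^ Suc k * qb q n (Suc k)"

lemma qb_0_right[simp]: "qb q n 0 = 1" by (cases n) auto
lemma qb_gt: "n < k \<Longrightarrow> qb q n k = 0"
proof (induction n arbitrary: k)
  case 0 then show ?case by simp
next
  case (Suc n) then show ?case by (cases k) auto
qed

lemma qb_R: "qint q (n - k) * qb q n k = qint q (Suc k) * qb q n (Suc k)"
proof (induction n arbitrary: k)
  case 0 then show ?case by simp
next
  case (Suc n)
  have I1: "qint q (Suc k) * qb q (Suc n) (Suc k) = qint q (Suc n) * qb q n k" for k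
  proof (cases "k \<le> n")
    case True
    have "qint q (Suc k) * qb q (Suc n) (Suc k) = qint q (Suc k) * qb q n k + q ^ Suc k * (qint q (Suc k) * qb q n (Suc k))"
      by (simp add: algebra_simps)
    also have "\<dots> = (qint q (Suc k) + q ^ Suc k * qint q (n - k)) * qb q n k"
      using Suc.IH[of k] by (simp add: algebra_simps)
    also have "qint q (Suc k) + q ^ Suc k * qint q (n - k) = qint q (Suc n)"
      using qint_add[of q "Suc k" "n - k"] True by simp
    finally show ?thesis .
  next
    case False
    then show ?thesis by (simp add: qb_gt)
  qed
  show ?case
  proof (cases k)
    case 0
    then show ?thesis using I1[of 0] by simp
  next
    case (Suc k')
    show ?thesis
    proof (cases "k' \<le> n")
      case True
      have "qint q (Suc n - k) * qb q (Suc n) k = qint q (n - k') * qb q n k' + q ^ Suc k' * (qint q (n - k') * qb q n (Suc k'))"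
        using Suc by (simp add: algebra_simps)
      also have "\<dots> = (qint q (Suc k') + q ^ Suc k' * qint q (n - k')) * qb q n (Suc k')"
        using Suc.IH[of k'] by (simp add: algebra_simps)
      also have "qint q (Suc k') + q ^ Suc k' * qint q (n - k') = qint q (Suc n)"
        using qint_add[of q "Suc k'" "n - k'"] True by simp
      finally show ?thesis using I1[of k] Suc by simp
    next
      case False
      then show ?thesis using Suc by (simp add: qb_gt)
    qed
  qed
qed

lemma qb_I1: "qint q (Suc k) * qb q (Suc n) (Suc k) = qint q (Suc n) * qb q n k"
proof (cases "k \<le> n")
  case True
  have "qint q (Suc k) * qb q (Suc n) (Suc k) = qint q (Suc k) * qb q n k + q ^ Suc k * (qint q (Suc k) * qb q n (Suc k))"
    by (simp add: algebra_simps)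
  also have "\<dots> = (qint q (Suc k) + q ^ Suc k * qint q (n - k)) * qb q n k"
    using qb_R[of q n k] by (simp add: algebra_simps)
  also have "qint q (Suc k) + q ^ Suc k * qint q (n - k) = qint q (Suc n)"
    using qint_add[of q "Suc k" "n - k"] True by simp
  finally show ?thesis .
next
  case False
  then show ?thesis by (simp add: qb_gt)
qed

fun ee :: "nat \<Rightarrow> nat" where
  "ee 0 = 0" | "ee (Suc k) = ee k + k + 2"

definition Kf :: "'a::comm_ring_1 \<Rightarrow> nat \<Rightarrow> nat \<Rightarrow> 'a" where
  "Kf q m k = q ^ ee k * qfact q m * qb q (m - 1) k"

definition KK :: "'a::comm_ring_1 \<Rightarrow> nat \<Rightarrow> nat \<Rightarrow> 'a" where
  "KK q m h = (if h = 0 then 0 else Kf q m (h - 1))"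

lemma Kf_rec:
  assumes "m \<ge> 1"
  shows "Kf q (Suc m) k = q ^ k * qint q (Suc k) * (Kf q m (Suc k) + (1 + q) * Kf q m k + q * KK q m k)"
proof -
  obtain m' where m: "m = Suc m'" using assms by (cases m) auto
  have A: "qint q (Suc (Suc m')) * qb q (Suc m') k = qint q (Suc k) * qb q (Suc (Suc m')) (Suc k)"
    using qb_I1[of q k "Suc m'"] by simp
  show ?thesis
  proof (cases k)
    case 0
    have "Kf q (Suc m) k = qfact q (Suc m') * (qint q (Suc (Suc m')) * qb q (Suc m') 0)"
      using 0 m by (simp add: Kf_def qfact_Suc algebra_simps)
    also have "\<dots> = qfact q (Suc m') * (1 + q + q^2 * qb q m' 1)"
      using A 0 by (simp add: power2_eq_square algebra_simps)
    finally show ?thesis using 0 m by (simp add: Kf_def KK_def power2_eq_square algebra_simps)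
  next
    case (Suc k')
    define X where "X = qb q m' k'"
    define Y where "Y = qb q m' k"
    define Z where "Z = qb q m' (Suc k)"
    define E where "E = q ^ ee k'"
    define P where "P = q ^ k"
    define F where "F = qfact q (Suc m')"
    define I where "I = qint q (Suc k)"
    have P1: "qb q (Suc m') k = X + P * Y" using Suc by (simp add: X_def Y_def P_def)
    have P2: "qb q (Suc m') (Suc k) = Y + P * q * Z" by (simp add: Y_def Z_def P_def)
    have P3: "qb q (Suc (Suc m')) (Suc k) = qb q (Suc m') k + P * q * qb q (Suc m') (Suc k)"
      by (simp add: P_def)
    have E1: "q ^ ee k = E * P * q" using Suc by (simp add: E_def P_def power_add)
    have E2: "q ^ ee (Suc k) = E * P * q * P * q * q" using E1 by (simp add: power_add P_def)
    have "Kf q (Suc m) k = q ^ ee k * F * (qint q (Suc (Suc m')) * qb q (Suc m') k)"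
      using m by (simp add: Kf_def qfact_Suc F_def algebra_simps)
    also have "\<dots> = q ^ ee k * F * (I * qb q (Suc (Suc m')) (Suc k))" using A by (simp add: I_def)
    also have "\<dots> = E * P * q * F * I * (X + P * Y + P * q * (Y + P * q * Z))"
      unfolding P3 P1 P2 E1 by (simp add: algebra_simps)
    finally have L: "Kf q (Suc m) k = E * P * q * F * I * (X + P * Y + P * q * (Y + P * q * Z))" .
    have R: "q ^ k * qint q (Suc k) * (Kf q m (Suc k) + (1 + q) * Kf q m k + q * KK q m k)
       = P * I * (E * P * q * P * q * q * F * Z + (1 + q) * (E * P * q) * F * Y + q * (E * F * X))"
      using m Suc unfolding Kf_def KK_def E2 E1 by (simp add: P_def I_def F_def X_def Y_def Z_def E_def mult.assoc)
    show ?thesis unfolding L R by (simp add: algebra_simps)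
  qed
qed

definition Gc :: "'a::comm_ring_1 \<Rightarrow> nat \<Rightarrow> nat \<Rightarrow> 'a" where
  "Gc q m h = Kf q m h + KK q m h"

definition Dw :: "'a::comm_ring_1 \<Rightarrow> nat \<Rightarrow> 'a" where
  "Dw q h = q ^ (h - 1) * qint q h"
definition Uw :: "'a::comm_ring_1 \<Rightarrow> nat \<Rightarrow> 'a" where
  "Uw q h = q ^ Suc h * qint q (Suc h)"

lemma Kf_rec2:
  assumes "m \<ge> 1"
  shows "Kf q (Suc m) h = Dw q (Suc h) * Gc q m (Suc h) + Uw q h * Gc q m h"
  using Kf_rec[OF assms, of q h] by (simp add: Dw_def Uw_def Gc_def KK_def algebra_simps)

lemma Gc_rec:
  assumes "m \<ge> 1"
  shows "Gc q (Suc m) h = Dw q (Suc h) * Gc q m (Suc h) + (Dw q h + Uw q h) * Gc q m h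
           + (if h = 0 then 0 else Uw q (h - 1) * Gc q m (h - 1))"
proof (cases h)
  case 0
  then show ?thesis using Kf_rec2[OF assms, of q 0] by (simp add: Gc_def KK_def Dw_def)
next
  case (Suc h')
  then show ?thesis using Kf_rec2[OF assms, of q h] Kf_rec2[OF assms, of q h']
    by (simp add: Gc_def KK_def algebra_simps)
qed

lemma Gc_1: "Gc q 1 0 = 1" "Gc q 1 1 = 1" "h \<ge> 2 \<Longrightarrow> Gc q 1 h = 0"
  by (auto simp: Gc_def Kf_def KK_def qfact_def)

lemma Gc_n0: "n \<ge> 1 \<Longrightarrow> Gc q n 0 = qfact q n"
  by (simp add: Gc_def Kf_def KK_def)


fun asc_over :: "nat \<Rightarrow> nat list \<Rightarrow> nat" where
  "asc_over x (a # b # l) = (if a < x \<and> x < b then 1 else 0) + asc_over x (b # l)"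
| "asc_over x _ = 0"

fun des :: "nat list \<Rightarrow> nat" where
  "des (a # b # l) = (if a < b then 0 else 1) + des (b # l)"
| "des _ = 0"

fun ssum :: "(nat list \<Rightarrow> nat \<Rightarrow> nat list \<Rightarrow> nat) \<Rightarrow> nat list \<Rightarrow> nat list \<Rightarrow> nat" where
  "ssum f pre [] = 0"
| "ssum f pre (x # s) = f pre x s + ssum f (pre @ [x]) s"

definition st_set :: "nat list \<Rightarrow> nat \<Rightarrow> bool" where
  "st_set r i = ((\<exists>a\<in>set r. a < i) \<and> (\<exists>b\<in>set r. i < b))"

lemma straddles_st: "straddles w k i = st_set (runs w ! k) i"
  by (simp add: straddles_def st_set_def)

lemma runs_cons: "w \<noteq> [] \<Longrightarrow> runs (x # w) = (if x < hd w then (x # hd (runs w)) # tl (runs w) else [x] # runs w)"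
  by (cases w) (auto simp: Let_def)

lemma runs_ne: "w \<noteq> [] \<Longrightarrow> runs w \<noteq> []"
proof (induction w rule: runs.induct)
  case (3 x y xs) then show ?case by (auto simp: Let_def)
qed auto

lemma runs_nonempty: "r \<in> set (runs w) \<Longrightarrow> r \<noteq> []"
proof (induction w arbitrary: r rule: runs.induct)
  case (3 x y xs)
  have ne: "runs (y # xs) \<noteq> []" by (rule runs_ne) simp
  show ?case
  proof (cases "x < y")
    case True
    then have "r = x # hd (runs (y # xs)) \<or> r \<in> set (tl (runs (y # xs)))" using 3(2) by (auto simp: Let_def)
    then show ?thesis using 3(1) ne by (metis list.distinct(1) list.set_sel(2))
  next
    case False
    then show ?thesis using 3 by (auto simp: Let_def)
  qed
qed auto

lemma concat_runs: "concat (runs w) = w"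
proof (induction w rule: runs.induct)
  case (3 x y xs)
  have ne: "runs (y # xs) \<noteq> []" by (rule runs_ne) simp
  show ?case using 3 ne by (cases "runs (y # xs)") (auto simp: Let_def)
qed auto

lemma hd_runs_ge: "w \<noteq> [] \<Longrightarrow> c \<in> set (hd (runs w)) \<Longrightarrow> hd w \<le> c"
proof (induction w arbitrary: c rule: runs.induct)
  case (3 x y xs)
  show ?case
  proof (cases "x < y")
    case True
    then have "c = x \<or> c \<in> set (hd (runs (y # xs)))" using 3(3) by (auto simp: Let_def)
    then show ?thesis using 3(1)[of c] True by auto
  next
    case False then show ?thesis using 3 by (auto simp: Let_def)
  qed
qed auto

lemma hd_hd_runs: "w \<noteq> [] \<Longrightarrow> hd (hd (runs w)) = hd w"
proof -
  assume ne: "w \<noteq> []"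
  have r: "runs w \<noteq> []" using runs_ne[OF ne] .
  have "hd (runs w) \<noteq> []" using runs_nonempty[OF hd_in_set[OF r]] .
  then show ?thesis using concat_runs[of w] r by (cases "runs w") auto
qed

lemma length_runs: "w \<noteq> [] \<Longrightarrow> length (runs w) = Suc (des w)"
proof (induction w rule: runs.induct)
  case (3 x y xs)
  have ne: "runs (y # xs) \<noteq> []" by (rule runs_ne) simp
  show ?case using 3 ne by (cases "runs (y # xs)") (auto simp: Let_def)
qed auto

lemma distinct_concat_nth:
  assumes "distinct (concat xs)" "i < length xs" "j < length xs" "i \<noteq> j" "a \<in> set (xs ! i)"
  shows "a \<notin> set (xs ! j)"
  using assms
proof (induction xs arbitrary: i j)
  case Nil then show ?case by simp
next
  case (Cons y ys)
  show ?case
  proof (cases i)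
    case 0
    then obtain j' where j: "j = Suc j'" using Cons by (cases j) auto
    then have "xs' \<in> set ys \<Longrightarrow> set y \<inter> set xs' = {}" for xs' using Cons(2) by auto
    then show ?thesis using Cons j 0 by (auto simp: set_conv_nth)
  next
    case (Suc i')
    show ?thesis
    proof (cases j)
      case 0
      have "ys ! i' \<in> set ys" using Cons Suc by simp
      then have "a \<in> set (concat ys)" using Cons(6) Suc by auto
      then show ?thesis using Cons(2) 0 by auto
    next
      case (Suc j')
      then show ?thesis using Cons \<open>i = Suc i'\<close> by auto
    qed
  qed
qed

lemma run_idx_eq:
  assumes "distinct w" "k < length (runs w)" "i \<in> set (runs w ! k)"
  shows "run_idx w i = k"
  unfolding run_idx_def
proof (rule the_equality)
  show "k < length (runs w) \<and> i \<in> set (runs w ! k)" using assms by simp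
next
  fix k' assume k': "k' < length (runs w) \<and> i \<in> set (runs w ! k')"
  show "k' = k"
  proof (rule ccontr)
    assume "k' \<noteq> k"
    then show False using distinct_concat_nth[of "runs w" k k' i] assms k' concat_runs[of w] by auto
  qed
qed

lemma run_idx_ex:
  assumes "i \<in> set w"
  shows "\<exists>k < length (runs w). i \<in> set (runs w ! k)"
proof -
  have "i \<in> set (concat (runs w))" using assms concat_runs[of w] by simp
  then obtain r where "r \<in> set (runs w)" "i \<in> set r" by auto
  then show ?thesis by (auto simp: in_set_conv_nth)
qed


declare runs.simps(3)[simp del]

lemma runs_cons_lt:
  assumes "w \<noteq> []" "x < hd w"
  shows "length (runs (x # w)) = length (runs w)" "runs (x # w) ! 0 = x # runs w ! 0"
    "0 < k \<Longrightarrow> runs (x # w) ! k = runs w ! k"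
proof -
  obtain r0 rest where R: "runs w = r0 # rest" using runs_ne[OF assms(1)] by (cases "runs w") auto
  have e: "runs (x # w) = (x # r0) # rest" using runs_cons[OF assms(1), of x] assms(2) R by simp
  show "length (runs (x # w)) = length (runs w)" "runs (x # w) ! 0 = x # runs w ! 0" using e R by auto
  show "0 < k \<Longrightarrow> runs (x # w) ! k = runs w ! k" using e R by (cases k) auto
qed

lemma runs_cons_ge:
  assumes "w \<noteq> []" "\<not> x < hd w"
  shows "runs (x # w) = [x] # runs w"
  using runs_cons[OF assms(1), of x] assms(2) by simp

lemma st_set_cons:
  assumes "r0 \<noteq> []" "\<forall>c\<in>set r0. hd r0 \<le> c" "a < hd r0" "i \<notin> set r0"
  shows "st_set (a # r0) i \<longleftrightarrow> (a < i \<and> i < hd r0) \<or> st_set r0 i"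
    "\<not> ((a < i \<and> i < hd r0) \<and> st_set r0 i)"
proof -
  have hd: "hd r0 \<in> set r0" using assms(1) by simp
  show "st_set (a # r0) i \<longleftrightarrow> (a < i \<and> i < hd r0) \<or> st_set r0 i"
  proof
    assume A: "st_set (a # r0) i"
    show "(a < i \<and> i < hd r0) \<or> st_set r0 i"
    proof (cases "i < hd r0")
      case True
      then show ?thesis using A assms(2) unfolding st_set_def by force
    next
      case False
      then have "hd r0 < i" using assms(4) hd by (cases "hd r0 = i") auto
      then show ?thesis using A hd assms(3) unfolding st_set_def by force
    qed
  next
    assume B: "(a < i \<and> i < hd r0) \<or> st_set r0 i"
    then show "st_set (a # r0) i" using hd unfolding st_set_def by auto
  qed
  show "\<not> ((a < i \<and> i < hd r0) \<and> st_set r0 i)"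
  proof
    assume "(a < i \<and> i < hd r0) \<and> st_set r0 i"
    then obtain c where "c \<in> set r0" "c < i" "i < hd r0" unfolding st_set_def by auto
    then show False using assms(2) by fastforce
  qed
qed

lemma card_less_sum: "card {k. k < (r::nat) \<and> P k} = (\<Sum>k<r. if P k then 1 else 0)"
proof (induction r)
  case 0 then show ?case by simp
next
  case (Suc r)
  have "{k. k < Suc r \<and> P k} = (if P r then insert r {k. k < r \<and> P k} else {k. k < r \<and> P k})"
    by (auto simp: less_Suc_eq)
  then show ?case using Suc by (simp add: card_insert_if)
qed

lemma lsg_at_def2: "lsg_at w i = (\<Sum>k<run_idx w i. if st_set (runs w ! k) i then 1 else 0)"
  unfolding lsg_at_def straddles_st by (rule card_less_sum)

lemma rsg_at_def2: "rsg_at w i = (\<Sum>k<length (runs w). if run_idx w i < k \<and> st_set (runs w ! k) i then 1 else 0)"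
proof -
  have "rsg_at w i = card {k. k < length (runs w) \<and> (run_idx w i < k \<and> st_set (runs w ! k) i)}"
    unfolding rsg_at_def straddles_st by (rule arg_cong[where f=card]) auto
  then show ?thesis by (simp add: card_less_sum)
qed

lemma run_idx_cons_self:
  assumes "distinct (x # w)"
  shows "run_idx (x # w) x = 0"
proof (cases "w = []")
  case True then show ?thesis using run_idx_eq[OF assms, of 0 x] by simp
next
  case False
  show ?thesis
  proof (cases "x < hd w")
    case True
    show ?thesis using run_idx_eq[OF assms, of 0 x] runs_cons_lt[OF False True] runs_ne[OF False] by simp
  next
    case ge: False
    show ?thesis using run_idx_eq[OF assms, of 0 x] runs_cons_ge[OF False ge] by simp
  qed
qed

lemma run_idx_cons:
  assumes "distinct (x # w)" "i \<in> set w"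
  shows "run_idx (x # w) i = (if x < hd w then run_idx w i else Suc (run_idx w i))"
proof -
  have ne: "w \<noteq> []" using assms by auto
  have dw: "distinct w" using assms by simp
  obtain k where k: "k < length (runs w)" "i \<in> set (runs w ! k)" using run_idx_ex[OF assms(2)] by blast
  have rk: "run_idx w i = k" using run_idx_eq[OF dw k] .
  show ?thesis
  proof (cases "x < hd w")
    case True
    have "i \<in> set (runs (x # w) ! k)" using k runs_cons_lt[OF ne True] by (cases "k = 0") auto
    then have "run_idx (x # w) i = k" using run_idx_eq[OF assms(1)] k runs_cons_lt[OF ne True] by simp
    then show ?thesis using True rk by simp
  next
    case False
    have "run_idx (x # w) i = Suc k" using run_idx_eq[OF assms(1), of "Suc k" i] k runs_cons_ge[OF ne False] by simp
    then show ?thesis using False rk by simp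
  qed
qed

lemma lsg_at_cons_self: "distinct (x # w) \<Longrightarrow> lsg_at (x # w) x = 0"
  by (simp add: lsg_at_def2 run_idx_cons_self)

lemma lsg_at_cons:
  assumes "distinct (x # w)" "i \<in> set w"
  shows "lsg_at (x # w) i = lsg_at w i + (if x < i \<and> i < hd w then 1 else 0)"
proof -
  have ne: "w \<noteq> []" using assms by auto
  have dw: "distinct w" using assms by simp
  obtain k where k: "k < length (runs w)" "i \<in> set (runs w ! k)" using run_idx_ex[OF assms(2)] by blast
  have rk: "run_idx w i = k" using run_idx_eq[OF dw k] .
  show ?thesis
  proof (cases "x < hd w")
    case True
    note L = runs_cons_lt[OF ne True]
    have r0: "runs w ! 0 = hd (runs w)" using runs_ne[OF ne] by (simp add: hd_conv_nth)
    show ?thesis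
    proof (cases k)
      case 0
      have "hd w \<le> i" using hd_runs_ge[OF ne] k 0 r0 by simp
      then show ?thesis using run_idx_cons[OF assms] True rk 0 by (simp add: lsg_at_def2)
    next
      case (Suc k')
      have dc: "distinct (concat (runs w))" using concat_runs[of w] dw by simp
      have l0: "0 < length (runs w)" using k(1) by arith
      have kn: "k \<noteq> 0" using Suc by simp
      have ni: "i \<notin> set (runs w ! 0)"
        using distinct_concat_nth[OF dc k(1) l0 kn k(2)] .
      have rne: "runs w ! 0 \<noteq> []" using runs_nonempty[OF hd_in_set[OF runs_ne[OF ne]]] by (simp add: r0)
      have hdr: "hd (runs w ! 0) = hd w" using hd_hd_runs[OF ne] r0 by simp
      have ge: "\<forall>c\<in>set (runs w ! 0). hd (runs w ! 0) \<le> c" using hd_runs_ge[OF ne] r0 hdr by simp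
      have S1: "st_set (x # runs w ! 0) i \<longleftrightarrow> (x < i \<and> i < hd w) \<or> st_set (runs w ! 0) i"
       and S2: "\<not> ((x < i \<and> i < hd w) \<and> st_set (runs w ! 0) i)"
        using st_set_cons[OF rne ge, of x i] True hdr ni by auto
      have "lsg_at (x # w) i = (\<Sum>k<Suc k'. if st_set (runs (x # w) ! k) i then 1 else 0)"
        using run_idx_cons[OF assms] True rk Suc by (simp add: lsg_at_def2)
      also have "\<dots> = (if st_set (x # runs w ! 0) i then 1 else 0) + (\<Sum>k<k'. if st_set (runs w ! Suc k) i then 1 else 0)"
        unfolding sum.lessThan_Suc_shift using L by simp
      also have "\<dots> = (if st_set (runs w ! 0) i then 1 else 0) + (if x < i \<and> i < hd w then 1 else 0) + (\<Sum>k<k'. if st_set (runs w ! Suc k) i then 1 else 0)"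
        using S1 S2 by auto
      also have "\<dots> = lsg_at w i + (if x < i \<and> i < hd w then 1 else 0)"
        unfolding lsg_at_def2 rk Suc sum.lessThan_Suc_shift by simp
      finally show ?thesis .
    qed
  next
    case False
    note G = runs_cons_ge[OF ne False]
    have "lsg_at (x # w) i = (\<Sum>k<Suc k. if st_set (runs (x # w) ! k) i then 1 else 0)"
      using run_idx_cons[OF assms] False rk by (simp add: lsg_at_def2)
    also have "\<dots> = (\<Sum>k<k. if st_set (runs w ! k) i then 1 else 0)"
      unfolding sum.lessThan_Suc_shift G by (simp add: st_set_def)
    finally show ?thesis using False rk by (simp add: lsg_at_def2)
  qed
qed

lemma rsg_at_cons:
  assumes "distinct (x # w)" "i \<in> set w"
  shows "rsg_at (x # w) i = rsg_at w i"
proof -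
  have ne: "w \<noteq> []" using assms by auto
  show ?thesis
  proof (cases "x < hd w")
    case True
    note L = runs_cons_lt[OF ne True]
    have "rsg_at (x # w) i = (\<Sum>k<length (runs w). if run_idx w i < k \<and> st_set (runs (x # w) ! k) i then 1 else 0)"
      using run_idx_cons[OF assms] True L by (simp add: rsg_at_def2)
    also have "\<dots> = rsg_at w i" unfolding rsg_at_def2
      by (rule sum.cong) (use L in auto)
    finally show ?thesis .
  next
    case False
    note G = runs_cons_ge[OF ne False]
    have "rsg_at (x # w) i = (\<Sum>k<Suc (length (runs w)). if Suc (run_idx w i) < k \<and> st_set (runs (x # w) ! k) i then 1 else 0)"
      using run_idx_cons[OF assms] False G by (simp add: rsg_at_def2)
    also have "\<dots> = rsg_at w i" unfolding rsg_at_def2 sum.lessThan_Suc_shift G by simp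
    finally show ?thesis .
  qed
qed

lemma asc_over_runs: "x \<notin> set w \<Longrightarrow> asc_over x w = (\<Sum>k<length (runs w). if st_set (runs w ! k) x then 1 else 0)"
proof (induction w rule: runs.induct)
  case (2 a) then show ?case by (simp add: st_set_def)
next
  case (3 a y xs)
  let ?w = "y # xs"
  have ne: "?w \<noteq> []" by simp
  have IH: "asc_over x ?w = (\<Sum>k<length (runs ?w). if st_set (runs ?w ! k) x then 1 else 0)" using 3 by simp
  show ?case
  proof (cases "a < y")
    case True
    then have T: "a < hd ?w" by simp
    note L = runs_cons_lt[OF ne T]
    have r0: "runs ?w ! 0 = hd (runs ?w)" using runs_ne[OF ne] by (simp add: hd_conv_nth)
    have rne: "runs ?w ! 0 \<noteq> []" using runs_nonempty[OF hd_in_set[OF runs_ne[OF ne]]] by (simp add: r0)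
    have hdr: "hd (runs ?w ! 0) = y" using hd_hd_runs[OF ne] r0 by simp
    have ge: "\<forall>c\<in>set (runs ?w ! 0). hd (runs ?w ! 0) \<le> c" using hd_runs_ge[OF ne] r0 hdr by simp
    have ni: "x \<notin> set (runs ?w ! 0)"
    proof
      assume "x \<in> set (runs ?w ! 0)"
      then have "x \<in> set (concat (runs ?w))" using runs_ne[OF ne] by (auto simp: r0)
      then show False using 3(2) concat_runs[of ?w] by simp
    qed
    have S1: "st_set (a # runs ?w ! 0) x \<longleftrightarrow> (a < x \<and> x < y) \<or> st_set (runs ?w ! 0) x"
     and S2: "\<not> ((a < x \<and> x < y) \<and> st_set (runs ?w ! 0) x)"
      using st_set_cons[OF rne ge, of a x] True hdr ni by auto
    obtain n where n: "length (runs ?w) = Suc n" using runs_ne[OF ne] by (cases "runs ?w") auto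
    have "(\<Sum>k<length (runs (a # ?w)). if st_set (runs (a # ?w) ! k) x then 1 else 0)
        = (\<Sum>k<Suc n. if st_set (runs (a # ?w) ! k) x then 1 else 0)"
      using L(1) n by simp
    also have "\<dots> = (if st_set (runs (a # ?w) ! 0) x then 1 else 0) + (\<Sum>k<n. if st_set (runs (a # ?w) ! Suc k) x then 1 else 0)"
      by (rule sum.lessThan_Suc_shift)
    also have "\<dots> = (if st_set (a # runs ?w ! 0) x then 1 else 0) + (\<Sum>k<n. if st_set (runs ?w ! Suc k) x then 1 else 0)"
      using L(2) L(3) by simp
    also have "\<dots> = (if a < x \<and> x < y then 1 else 0) + asc_over x ?w"
    proof -
      have "asc_over x ?w = (if st_set (runs ?w ! 0) x then 1 else 0) + (\<Sum>k<n. if st_set (runs ?w ! Suc k) x then 1 else 0)"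
        unfolding IH n by (rule sum.lessThan_Suc_shift)
      then show ?thesis using S1 S2 by auto
    qed
    finally show ?thesis by simp
  next
    case False
    note G = runs_cons_ge[OF ne, of a]
    have "(\<Sum>k<length (runs (a # ?w)). if st_set (runs (a # ?w) ! k) x then 1 else 0)
       = (\<Sum>k<Suc (length (runs ?w)). if st_set (([a] # runs ?w) ! k) x then 1 else 0)"
      using False G by simp
    also have "\<dots> = (if st_set [a] x then 1 else 0) + (\<Sum>k<length (runs ?w). if st_set (runs ?w ! k) x then 1 else 0)"
      by (simp only: sum.lessThan_Suc_shift) simp
    also have "\<dots> = asc_over x ?w" using IH by (simp add: st_set_def)
    finally have "(\<Sum>k<length (runs (a # ?w)). if st_set (runs (a # ?w) ! k) x then 1 else 0) = asc_over x ?w" .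
    then show ?thesis using False by simp
  qed
qed simp

lemma rsg_at_cons_self:
  assumes "distinct (x # w)"
  shows "rsg_at (x # w) x = asc_over x w"
proof (cases "w = []")
  case True then show ?thesis using run_idx_cons_self[OF assms] by (simp add: rsg_at_def2 st_set_def)
next
  case ne: False
  have xn: "x \<notin> set w" using assms by simp
  show ?thesis
  proof (cases "x < hd w")
    case True
    note L = runs_cons_lt[OF ne True]
    have r0: "runs w ! 0 = hd (runs w)" using runs_ne[OF ne] by (simp add: hd_conv_nth)
    have n0: "\<not> st_set (runs w ! 0) x" using hd_runs_ge[OF ne] r0 True unfolding st_set_def by force
    have pt: "(if 0 < k \<and> st_set (runs (x # w) ! k) x then 1 else 0) = (if st_set (runs w ! k) x then 1 else (0::nat))" for k
      using n0 L(3)[of k] by (cases "k = 0") auto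
    have "rsg_at (x # w) x = (\<Sum>k<length (runs w). if st_set (runs w ! k) x then 1 else 0)"
      unfolding rsg_at_def2 run_idx_cons_self[OF assms] L(1) pt ..
    then show ?thesis using asc_over_runs[OF xn] by simp
  next
    case False
    note G = runs_cons_ge[OF ne False]
    have "rsg_at (x # w) x = (\<Sum>k<Suc (length (runs w)). if 0 < k \<and> st_set (([x] # runs w) ! k) x then 1 else 0)"
      unfolding rsg_at_def2 run_idx_cons_self[OF assms] G by simp
    also have "\<dots> = (\<Sum>k<length (runs w). if st_set (runs w ! k) x then 1 else 0)"
      by (simp only: sum.lessThan_Suc_shift) simp
    finally have "rsg_at (x # w) x = (\<Sum>k<length (runs w). if st_set (runs w ! k) x then 1 else 0)" .
    then show ?thesis using asc_over_runs[OF xn] by simp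
  qed
qed


definition lsum :: "nat list \<Rightarrow> nat" where
  "lsum w = ssum (\<lambda>pre x suf. asc_over x pre) [] w"
definition rsum :: "nat list \<Rightarrow> nat" where
  "rsum w = ssum (\<lambda>pre x suf. asc_over x suf) [] w"

lemma asc_over_cons2: "p \<noteq> [] \<Longrightarrow> asc_over i (x # p) = (if x < i \<and> i < hd p then 1 else 0) + asc_over i p"
  by (cases p) auto

lemma ssum_l_cons: "p \<noteq> [] \<Longrightarrow> ssum (\<lambda>pre x suf. asc_over x pre) (x # p) s
   = ssum (\<lambda>pre x suf. asc_over x pre) p s + sum_list (map (\<lambda>i. if x < i \<and> i < hd p then 1 else 0) s)"
proof (induction s arbitrary: p)
  case Nil then show ?case by simp
next
  case (Cons a s)
  have "p @ [a] \<noteq> []" by simp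
  then show ?case using Cons.IH[of "p @ [a]"] Cons.prems by (simp add: asc_over_cons2)
qed

lemma ssum_r_pre: "ssum (\<lambda>pre x suf. asc_over x suf) p s = ssum (\<lambda>pre x suf. asc_over x suf) p' s"
  by (induction s arbitrary: p p') auto

lemma lsg_eq: "distinct w \<Longrightarrow> lsg w = lsum w"
proof (induction w)
  case Nil then show ?case by (simp add: lsg_def lsum_def)
next
  case (Cons x w)
  show ?case
  proof (cases "w = []")
    case True
    have "run_idx [x] x = 0" using run_idx_cons_self[OF Cons.prems] True by simp
    then show ?thesis using True by (simp add: lsg_def lsum_def lsg_at_def2)
  next
    case False
    then obtain y s where w: "w = y # s" by (cases w) auto
    have xn: "x \<notin> set w" using Cons.prems by simp
    have dw: "distinct w" using Cons.prems by simp
    have "lsg (x # w) = lsg_at (x # w) x + (\<Sum>i\<in>set w. lsg_at (x # w) i)"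
      unfolding lsg_def using xn by simp
    also have "\<dots> = (\<Sum>i\<in>set w. lsg_at w i + (if x < i \<and> i < hd w then 1 else 0))"
      using lsg_at_cons_self[OF Cons.prems] lsg_at_cons[OF Cons.prems] by simp
    also have "\<dots> = lsg w + (\<Sum>i\<in>set w. (if x < i \<and> i < hd w then 1 else 0))"
      unfolding lsg_def by (simp add: sum.distrib)
    also have "(\<Sum>i\<in>set w. (if x < i \<and> i < hd w then 1 else 0)) = sum_list (map (\<lambda>i. if x < i \<and> i < y then 1 else 0) s)"
      using dw w by (simp add: sum.distinct_set_conv_list)
    finally have L: "lsg (x # w) = lsg w + sum_list (map (\<lambda>i. if x < i \<and> i < y then 1 else 0) s)" .
    have "lsum (x # w) = ssum (\<lambda>pre x suf. asc_over x pre) [x, y] s"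
      unfolding lsum_def w by simp
    also have "\<dots> = ssum (\<lambda>pre x suf. asc_over x pre) [y] s + sum_list (map (\<lambda>i. if x < i \<and> i < y then 1 else 0) s)"
      using ssum_l_cons[of "[y]" x s] by simp
    also have "ssum (\<lambda>pre x suf. asc_over x pre) [y] s = lsum w" unfolding lsum_def w by simp
    finally show ?thesis using L Cons.IH[OF dw] by simp
  qed
qed

lemma rsg_eq: "distinct w \<Longrightarrow> rsg w = rsum w"
proof (induction w)
  case Nil then show ?case by (simp add: rsg_def rsum_def)
next
  case (Cons x w)
  have xn: "x \<notin> set w" using Cons.prems by simp
  have dw: "distinct w" using Cons.prems by simp
  have "rsg (x # w) = rsg_at (x # w) x + (\<Sum>i\<in>set w. rsg_at (x # w) i)"
    unfolding rsg_def using xn by simp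
  also have "\<dots> = asc_over x w + rsg w"
    using rsg_at_cons_self[OF Cons.prems] rsg_at_cons[OF Cons.prems] unfolding rsg_def by simp
  finally show ?case using Cons.IH[OF dw] ssum_r_pre[of "[x]" w "[]"] by (simp add: rsum_def)
qed

lemma run_des: "w \<noteq> [] \<Longrightarrow> run w - 1 = des w"
  by (simp add: run_def length_runs)

definition wt :: "nat \<Rightarrow> nat list \<Rightarrow> nat \<Rightarrow> nat list \<Rightarrow> nat" where
  "wt N pre x suf = (if x = N then 0 else
     (if pre \<noteq> [] \<and> \<not> last pre < x then 1 else 0) + 2 * asc_over x pre + asc_over x suf)"

definition stc :: "nat \<Rightarrow> nat list \<Rightarrow> nat" where
  "stc N w = ssum (wt N) [] w"

lemma asc_over_Ncons: "x < N \<Longrightarrow> asc_over x (N # p) = asc_over x p"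
  by (cases p) auto

definition dl :: "nat list \<Rightarrow> nat \<Rightarrow> nat list \<Rightarrow> nat" where
  "dl p x s = (if p = [] then 1 else if \<not> last p < x then 1 else 0)"

lemma ssum_wt_N: "\<forall>x\<in>set s. x < N \<Longrightarrow> ssum (wt N) (N # p) s =
   ssum dl p s + 2 * ssum (\<lambda>pre x suf. asc_over x pre) p s + ssum (\<lambda>pre x suf. asc_over x suf) p s"
proof (induction s arbitrary: p)
  case Nil then show ?case by simp
next
  case (Cons a s)
  have "wt N (N # p) a s = dl p a s + 2 * asc_over a p + asc_over a s"
    using Cons.prems by (auto simp: wt_def dl_def asc_over_Ncons)
  then show ?case using Cons.IH[of "p @ [a]"] Cons.prems by simp
qed

lemma ssum_dl: "ssum dl (p @ [a]) s = des (a # s)"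
proof (induction s arbitrary: p a)
  case Nil then show ?case by simp
next
  case (Cons b s)
  show ?case using Cons.IH[of "p @ [a]" b] by (simp add: dl_def)
qed

lemma stc_perm:
  assumes "distinct w" "w \<noteq> []" "\<forall>x\<in>set w. x < N"
  shows "stc N (N # w) = Suc (run w - 1 + 2 * lsg w + rsg w)"
proof -
  obtain y s where w: "w = y # s" using assms(2) by (cases w) auto
  have "stc N (N # w) = ssum (wt N) [N] w" by (simp add: stc_def wt_def)
  also have "\<dots> = ssum dl [] w + 2 * lsum w + rsum w"
    using ssum_wt_N[of w N "[]"] assms(3) by (simp add: lsum_def rsum_def)
  also have "ssum dl [] w = Suc (des w)" using ssum_dl[of "[]" y s] w by (simp add: dl_def)
  finally show ?thesis using lsg_eq[OF assms(1)] rsg_eq[OF assms(1)] run_des[OF assms(2)] by simp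
qed


fun nonn :: "nat \<Rightarrow> nat list \<Rightarrow> bool" where
  "nonn N (a # b # l) = (\<not> (a = N \<and> b = N) \<and> nonn N (b # l))"
| "nonn N _ = True"

lemma nonn_Cons: "nonn N (a # l) \<longleftrightarrow> nonn N l \<and> \<not> (l \<noteq> [] \<and> a = N \<and> hd l = N)"
  by (cases l) auto

lemma nonn_append: "nonn N (xs @ ys) \<longleftrightarrow> nonn N xs \<and> nonn N ys \<and> \<not> (xs \<noteq> [] \<and> ys \<noteq> [] \<and> last xs = N \<and> hd ys = N)"
proof (induction xs)
  case Nil then show ?case by simp
next
  case (Cons a xs)
  then show ?case by (cases xs) (auto simp: nonn_Cons)
qed

definition cnt :: "nat \<Rightarrow> nat list \<Rightarrow> nat" where
  "cnt N l = length (filter (\<lambda>x. x = N) l)"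

lemma cnt_simps[simp]: "cnt N [] = 0" "cnt N (a # l) = (if a = N then Suc (cnt N l) else cnt N l)"
  "cnt N (xs @ ys) = cnt N xs + cnt N ys"
  by (auto simp: cnt_def)

lemma asc_over_Cons': "asc_over x (a # l) = (if l \<noteq> [] \<and> a < x \<and> x < hd l then 1 else 0) + asc_over x l"
  by (cases l) auto

lemma asc_over_append: "asc_over x (us @ vs) = asc_over x us + asc_over x vs +
   (if us \<noteq> [] \<and> vs \<noteq> [] \<and> last us < x \<and> x < hd vs then 1 else 0)"
proof (induction us)
  case Nil then show ?case by simp
next
  case (Cons a us)
  show ?case using Cons.IH by (cases "us = []") (auto simp: asc_over_Cons')
qed

lemma asc_over_big: "\<forall>y\<in>set l. x < y \<Longrightarrow> asc_over x l = 0"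
  by (induction x l rule: asc_over.induct) auto

lemma asc_over_big_mid:
  assumes "l \<noteq> []" "\<forall>y\<in>set l. x < y"
  shows "asc_over x (a @ l @ b) = asc_over x a + (if a \<noteq> [] \<and> last a < x then 1 else 0) + asc_over x b"
proof -
  have "x < last l" using assms(2) last_in_set[OF assms(1)] by blast
  then have nl: "\<not> last l < x" by simp
  have "asc_over x (l @ b) = asc_over x b" using asc_over_append[of x l b] asc_over_big[OF assms(2)] nl
    by auto
  moreover have "hd (l @ b) = hd l" using assms(1) by simp
  moreover have "x < hd l" using assms by simp
  ultimately show ?thesis using asc_over_append[of x a "l @ b"] assms(1) by auto
qed

lemma asc_over_max:
  assumes "nonn N l" "\<forall>y\<in>set l. y \<noteq> N \<longrightarrow> y < m" "m < N"
  shows "asc_over m l = cnt N l - (if l \<noteq> [] \<and> hd l = N then 1 else 0)"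
  using assms
proof (induction m l rule: asc_over.induct)
  case (1 x a b l)
  have IH: "asc_over x (b # l) = cnt N (b # l) - (if b = N then 1 else 0)" using 1 by (simp add: nonn_Cons)
  show ?case
  proof (cases "a = N")
    case True
    then have "b \<noteq> N" using 1(2) by simp
    then show ?thesis using IH True 1(4) by auto
  next
    case False
    then have "a < x" using 1(3) by simp
    moreover have "x < b \<longleftrightarrow> b = N" using 1(3,4) by auto
    ultimately show ?thesis using IH False by auto
  qed
qed auto

lemma ssum_append: "ssum f pre (xs @ ys) = ssum (\<lambda>p x s. f p x (s @ ys)) pre xs + ssum f (pre @ xs) ys"
  by (induction xs arbitrary: pre) auto

lemma ssum_cong_suf: "(\<And>p x s. x \<in> set xs \<Longrightarrow> f p x s = g p x s) \<Longrightarrow> ssum f pre xs = ssum g pre xs"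
  by (induction xs arbitrary: pre) auto

lemma ssum_cong_pre: "(\<And>t x s. x \<in> set ys \<Longrightarrow> f (P1 @ t) x s = g (P2 @ t) x s) \<Longrightarrow> ssum f (P1 @ t0) ys = ssum g (P2 @ t0) ys"
proof (induction ys arbitrary: t0)
  case Nil then show ?case by simp
next
  case (Cons a ys)
  have "ssum f (P1 @ t0 @ [a]) ys = ssum g (P2 @ t0 @ [a]) ys" using Cons by simp
  then show ?case using Cons.prems[of a t0] by simp
qed


definition small :: "nat \<Rightarrow> nat \<Rightarrow> nat list \<Rightarrow> bool" where
  "small N m l = (\<forall>y\<in>set l. y \<noteq> N \<longrightarrow> y < m)"

definition piece :: "nat \<Rightarrow> nat \<Rightarrow> nat \<Rightarrow> nat list" where
  "piece N m t = (if t = 0 then [m] else if t = 1 then [m, N] else if t = 2 then [N, m] else [N, m, N])"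

definition wgt :: "nat \<Rightarrow> nat \<Rightarrow> nat \<Rightarrow> nat" where
  "wgt t j r = (if t < 2 then 2 * (j - 1) + r else Suc (2 * j + r))"

lemma piece_big: "m < N \<Longrightarrow> x < m \<Longrightarrow> \<forall>y\<in>set (piece N m t). x < y"
  by (auto simp: piece_def)

lemma piece_ne: "piece N m t \<noteq> []" by (simp add: piece_def)

lemma last_piece: "m < N \<Longrightarrow> x < m \<Longrightarrow> \<not> last (piece N m t) < x"
  by (auto simp: piece_def)

lemma ins_stc:
  assumes mN: "m < N" and sx: "small N m xs" and sy: "small N m ys"
    and nn: "nonn N (xs @ N # ys)" and hx: "xs \<noteq> [] \<Longrightarrow> hd xs = N"
    and t2: "t < 2 \<Longrightarrow> xs \<noteq> []"
  shows "stc N (xs @ piece N m t @ ys) = stc N (xs @ N # ys) + wgt t (cnt N xs) (cnt N ys)"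
proof -
  define P where "P = piece N m t"
  have split: "stc N (xs @ Q @ ys) = ssum (\<lambda>p x s. wt N p x (s @ Q @ ys)) [] xs
      + ssum (\<lambda>p x s. wt N p x (s @ ys)) xs Q + ssum (wt N) (xs @ Q) ys" for Q
    unfolding stc_def by (simp add: ssum_append)
  have A: "ssum (\<lambda>p x s. wt N p x (s @ P @ ys)) [] xs = ssum (\<lambda>p x s. wt N p x (s @ [N] @ ys)) [] xs"
  proof (rule ssum_cong_suf)
    fix p x s assume x: "x \<in> set xs"
    show "wt N p x (s @ P @ ys) = wt N p x (s @ [N] @ ys)"
    proof (cases "x = N")
      case True then show ?thesis by (simp add: wt_def)
    next
      case False
      then have xm: "x < m" using sx x by (simp add: small_def)
      have "asc_over x (s @ P @ ys) = asc_over x (s @ [N] @ ys)"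
        using asc_over_big_mid[OF piece_ne[of N m t] piece_big[OF mN xm, of t], where a=s and b=ys]
          asc_over_big_mid[of "[N]" x s ys] xm mN unfolding P_def by simp
      then show ?thesis by (simp add: wt_def)
    qed
  qed
  have C: "ssum (wt N) (xs @ P) ys = ssum (wt N) (xs @ [N]) ys"
  proof -
    have "wt N ((xs @ P) @ u) x s = wt N ((xs @ [N]) @ u) x s" if x: "x \<in> set ys" for u x s
    proof (cases "x = N")
      case True then show ?thesis by (simp add: wt_def)
    next
      case False
      then have xm: "x < m" using sy x by (simp add: small_def)
      have a: "asc_over x (xs @ P @ u) = asc_over x (xs @ [N] @ u)"
        using asc_over_big_mid[OF piece_ne[of N m t] piece_big[OF mN xm, of t], where a=xs and b=u]
          asc_over_big_mid[of "[N]" x xs u] xm mN unfolding P_def by simp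
      have l: "(\<not> last (xs @ P @ u) < x) = (\<not> last (xs @ [N] @ u) < x)"
        using last_piece[OF mN xm, of t] xm mN piece_ne[of N m t] unfolding P_def
        by (cases "u = []") auto
      have "P \<noteq> []" using piece_ne[of N m t] by (simp add: P_def)
      then show ?thesis using a l False by (simp add: wt_def)
    qed
    then have "ssum (wt N) ((xs @ P) @ []) ys = ssum (wt N) ((xs @ [N]) @ []) ys"
      by (rule ssum_cong_pre)
    then show ?thesis by simp
  qed
  have nx: "nonn N xs" and ny: "nonn N ys" and lx: "xs \<noteq> [] \<Longrightarrow> last xs \<noteq> N"
    and hy: "ys \<noteq> [] \<Longrightarrow> hd ys \<noteq> N"
    using nn by (auto simp: nonn_append nonn_Cons)
  have sxl: "\<forall>y\<in>set xs. y \<noteq> N \<longrightarrow> y < m" and syl: "\<forall>y\<in>set ys. y \<noteq> N \<longrightarrow> y < m"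
    using sx sy by (auto simp: small_def)
  have a1: "asc_over m xs = cnt N xs - 1"
    using asc_over_max[OF nx sxl mN] hx by (cases "xs = []") auto
  have a2: "asc_over m ys = cnt N ys"
    using asc_over_max[OF ny syl mN] hy by (cases "ys = []") auto
  have a3: "asc_over m (N # ys) = cnt N ys"
  proof -
    have "nonn N (N # ys)" using ny hy by (auto simp: nonn_Cons)
    then show ?thesis using asc_over_max[of N "N # ys" m] syl mN by simp
  qed
  have a4: "asc_over m (xs @ [N]) = cnt N xs"
  proof -
    have "nonn N (xs @ [N])" using nx lx by (auto simp: nonn_append)
    moreover have "hd (xs @ [N]) = N" using hx by (cases xs) auto
    ultimately show ?thesis using asc_over_max[of N "xs @ [N]" m] sxl mN by simp
  qed
  have l0: "xs \<noteq> [] \<Longrightarrow> last xs < m" using lx sxl last_in_set by blast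
  have B: "ssum (\<lambda>p x s. wt N p x (s @ ys)) xs P = wgt t (cnt N xs) (cnt N ys)"
  proof -
    consider "t = 0" | "t = 1" | "t = 2" | "t \<ge> 3" by linarith
    then show ?thesis
    proof cases
      case 1
      then show ?thesis using t2 l0 a1 a2 mN by (simp add: P_def piece_def wt_def wgt_def)
    next
      case 2
      then show ?thesis using t2 l0 a1 a3 mN by (simp add: P_def piece_def wt_def wgt_def)
    next
      case 3
      then show ?thesis using a4 a2 mN by (simp add: P_def piece_def wt_def wgt_def)
    next
      case 4
      then show ?thesis using a4 a3 mN by (simp add: P_def piece_def wt_def wgt_def)
    qed
  qed
  have B0: "ssum (\<lambda>p x s. wt N p x (s @ ys)) xs [N] = 0" by (simp add: wt_def)
  show ?thesis using split[of P] split[of "[N]"] A B C B0 unfolding P_def by simp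
qed


definition cfg :: "nat \<Rightarrow> nat set \<Rightarrow> nat \<Rightarrow> nat list set" where
  "cfg N A h = {c. c \<noteq> [] \<and> hd c = N \<and> nonn N c \<and> distinct (filter (\<lambda>x. x \<noteq> N) c)
      \<and> set (filter (\<lambda>x. x \<noteq> N) c) = A \<and> cnt N c = Suc h}"

definition hh :: "nat \<Rightarrow> nat \<Rightarrow> nat" where
  "hh t h = (if t = 0 then Suc h else if t = 3 then h - 1 else h)"

definition Dom :: "nat \<Rightarrow> nat set \<Rightarrow> nat \<Rightarrow> (nat \<times> nat list \<times> nat list) set" where
  "Dom N A h = {(t, xs, ys). t < 4 \<and> xs @ N # ys \<in> cfg N A (hh t h) \<and> (t < 2 \<longrightarrow> xs \<noteq> []) \<and> (t = 3 \<longrightarrow> 1 \<le> h)}"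

definition ins :: "nat \<Rightarrow> nat \<Rightarrow> nat \<times> nat list \<times> nat list \<Rightarrow> nat list" where
  "ins N m d = (case d of (t, xs, ys) \<Rightarrow> xs @ piece N m t @ ys)"

definition rem :: "nat \<Rightarrow> nat \<Rightarrow> nat list \<Rightarrow> nat \<times> nat list \<times> nat list" where
  "rem N m c = (let xs = takeWhile (\<lambda>x. x \<noteq> m) c; ys = tl (dropWhile (\<lambda>x. x \<noteq> m) c) in
     if last xs = N then (if ys \<noteq> [] \<and> hd ys = N then (3, butlast xs, tl ys) else (2, butlast xs, ys))
     else (if ys \<noteq> [] \<and> hd ys = N then (1, xs, tl ys) else (0, xs, ys)))"

lemma tw_split: "m \<notin> set xs \<Longrightarrow> takeWhile (\<lambda>x. x \<noteq> m) (xs @ m # ys) = xs"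
  by (induction xs) auto
lemma dw_split: "m \<notin> set xs \<Longrightarrow> dropWhile (\<lambda>x. x \<noteq> m) (xs @ m # ys) = m # ys"
  by (induction xs) auto

lemma rem_split:
  assumes "m \<notin> set xs" "m \<noteq> N"
  shows "rem N m (xs @ m # ys) = (if last xs = N then (if ys \<noteq> [] \<and> hd ys = N then (3, butlast xs, tl ys) else (2, butlast xs, ys))
     else (if ys \<noteq> [] \<and> hd ys = N then (1, xs, tl ys) else (0, xs, ys)))"
  unfolding rem_def Let_def using tw_split[OF assms(1)] dw_split[OF assms(1)] by simp

lemma cfg_split:
  assumes "c \<in> cfg N A h" "m \<in> A"
  obtains xs ys where "c = xs @ m # ys" "m \<notin> set xs" "m \<notin> set ys" "xs \<noteq> []"
proof -
  have mN: "m \<noteq> N" using assms unfolding cfg_def by auto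
  have mc: "m \<in> set c" using assms unfolding cfg_def by auto
  define xs where "xs = takeWhile (\<lambda>x. x \<noteq> m) c"
  define ys where "ys = tl (dropWhile (\<lambda>x. x \<noteq> m) c)"
  have dne: "dropWhile (\<lambda>x. x \<noteq> m) c \<noteq> []" using mc by (simp add: dropWhile_eq_Nil_conv)
  have "hd (dropWhile (\<lambda>x. x \<noteq> m) c) = m" using hd_dropWhile[OF dne] by simp
  then have dw: "dropWhile (\<lambda>x. x \<noteq> m) c = m # ys" using dne unfolding ys_def by (cases "dropWhile (\<lambda>x. x \<noteq> m) c") auto
  have c: "c = xs @ m # ys" using takeWhile_dropWhile_id[of "\<lambda>x. x \<noteq> m" c] dw unfolding xs_def by simp
  have mx: "m \<notin> set xs" unfolding xs_def by (auto dest: set_takeWhileD)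
  have "distinct (filter (\<lambda>x. x \<noteq> N) c)" using assms unfolding cfg_def by simp
  then have my: "m \<notin> set ys" using c mN by auto
  have "xs \<noteq> []" using c assms mN unfolding cfg_def by (cases xs) auto
  then show ?thesis using that c mx my by blast
qed

lemma small_of_cfg: "c \<in> cfg N A h \<Longrightarrow> \<forall>a\<in>A. a < m \<Longrightarrow> small N m c"
  unfolding cfg_def small_def by auto

lemma ins_in_cfg:
  assumes d: "d \<in> Dom N A h" and mA: "\<forall>a\<in>A. a < m" and mN: "m < N"
  shows "ins N m d \<in> cfg N (insert m A) h"
proof -
  obtain t xs ys where dd: "d = (t, xs, ys)" by (cases d) auto
  have t4: "t < 4" and c': "xs @ N # ys \<in> cfg N A (hh t h)" and t2: "t < 2 \<longrightarrow> xs \<noteq> []" and t3: "t = 3 \<longrightarrow> 1 \<le> h"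
    using d unfolding Dom_def dd by auto
  have hx: "xs \<noteq> [] \<Longrightarrow> hd xs = N" using c' unfolding cfg_def by (cases xs) auto
  have nn: "nonn N (xs @ N # ys)" using c' unfolding cfg_def by simp
  have nx: "nonn N xs" and ny: "nonn N ys" and lx: "xs \<noteq> [] \<Longrightarrow> last xs \<noteq> N"
    and hy: "ys \<noteq> [] \<Longrightarrow> hd ys \<noteq> N"
    using nn by (auto simp: nonn_append nonn_Cons)
  have dist: "distinct (filter (\<lambda>x. x \<noteq> N) xs @ filter (\<lambda>x. x \<noteq> N) ys)"
    and st: "set (filter (\<lambda>x. x \<noteq> N) xs) \<union> set (filter (\<lambda>x. x \<noteq> N) ys) = A"
    and ct: "cnt N xs + cnt N ys = hh t h"
    using c' unfolding cfg_def by auto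
  have mA': "m \<notin> A" using mA by auto
  have mNe: "m \<noteq> N" using mN by simp
  let ?c = "xs @ piece N m t @ ys"
  have c1: "?c \<noteq> []" by (simp add: piece_def)
  have c2: "hd ?c = N"
  proof (cases "xs = []")
    case True
    then have "t \<ge> 2" using t2 by auto
    then show ?thesis using True by (simp add: piece_def)
  next
    case False
    then show ?thesis using hx by simp
  qed
  have c3: "nonn N ?c"
  proof -
    have hy': "ys = [] \<or> hd ys \<noteq> N" using hy by blast
    have "nonn N (piece N m t @ ys)" using ny hy' mNe by (simp add: piece_def nonn_Cons)
    moreover have "xs = [] \<or> last xs \<noteq> N" using lx by blast
    ultimately show ?thesis using nx unfolding nonn_append[where xs=xs] by blast
  qed
  have F: "filter (\<lambda>x. x \<noteq> N) ?c = filter (\<lambda>x. x \<noteq> N) xs @ m # filter (\<lambda>x. x \<noteq> N) ys"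
    using mNe by (simp add: piece_def)
  have c4: "distinct (filter (\<lambda>x. x \<noteq> N) ?c)" unfolding F using dist st mA' by auto
  have c5: "set (filter (\<lambda>x. x \<noteq> N) ?c) = insert m A" unfolding F using st by auto
  have cp: "cnt N (piece N m t) = (if t = 0 then 0 else if t < 3 then 1 else 2)" using mNe by (simp add: piece_def)
  have c6: "cnt N ?c = Suc h" using ct t3 t4 cp unfolding hh_def by (simp split: if_splits)
  have "?c \<in> cfg N (insert m A) h" unfolding cfg_def using c1 c2 c3 c4 c5 c6 by blast
  then show ?thesis unfolding ins_def dd by simp
qed

lemma cfgI: "c \<noteq> [] \<Longrightarrow> hd c = N \<Longrightarrow> nonn N c \<Longrightarrow> distinct (filter (\<lambda>x. x \<noteq> N) c)
   \<Longrightarrow> set (filter (\<lambda>x. x \<noteq> N) c) = A \<Longrightarrow> cnt N c = Suc h \<Longrightarrow> c \<in> cfg N A h"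
  unfolding cfg_def by blast

lemma not_m_in_dom:
  assumes "xs @ N # ys \<in> cfg N A h'" "\<forall>a\<in>A. a < m" "m < N"
  shows "m \<notin> set xs" "m \<notin> set ys"
proof -
  have S: "set (filter (\<lambda>x. x \<noteq> N) (xs @ N # ys)) = A" using assms(1) unfolding cfg_def by blast
  have "y \<in> A" if "y \<in> set xs \<union> set ys" "y \<noteq> N" for y
  proof -
    have "y \<in> set (filter (\<lambda>x. x \<noteq> N) (xs @ N # ys))" using that by auto
    then show ?thesis using S by blast
  qed
  then have "\<forall>y\<in>set xs \<union> set ys. y \<noteq> N \<longrightarrow> y \<in> A" by blast
  then show "m \<notin> set xs" "m \<notin> set ys" using assms(2,3) by auto
qed

lemma rem_ins:
  assumes d: "d \<in> Dom N A h" and mA: "\<forall>a\<in>A. a < m" and mN: "m < N"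
  shows "rem N m (ins N m d) = d"
proof -
  obtain t xs ys where dd: "d = (t, xs, ys)" by (cases d) auto
  have t4: "t < 4" and c': "xs @ N # ys \<in> cfg N A (hh t h)" and t2: "t < 2 \<longrightarrow> xs \<noteq> []"
    using d unfolding Dom_def dd by auto
  have nn: "nonn N (xs @ N # ys)" using c' unfolding cfg_def by simp
  have lx: "xs \<noteq> [] \<Longrightarrow> last xs \<noteq> N" and hy: "ys \<noteq> [] \<Longrightarrow> hd ys \<noteq> N"
    using nn by (auto simp: nonn_append nonn_Cons)
  have mx: "m \<notin> set xs" and my: "m \<notin> set ys" using not_m_in_dom[OF c' mA mN] by auto
  have mNe: "m \<noteq> N" using mN by simp
  have mx2: "m \<notin> set (xs @ [N])" using mx mNe by simp
  consider "t = 0" | "t = 1" | "t = 2" | "t = 3" using t4 by linarith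
  then show ?thesis
  proof cases
    case 1
    then have "ins N m d = xs @ m # ys" by (simp add: ins_def dd piece_def)
    then show ?thesis using rem_split[OF mx mNe, of ys] lx hy t2 1 dd by auto
  next
    case 2
    then have "ins N m d = xs @ m # N # ys" by (simp add: ins_def dd piece_def)
    then show ?thesis using rem_split[OF mx mNe, of "N # ys"] lx t2 2 dd by auto
  next
    case 3
    then have "ins N m d = (xs @ [N]) @ m # ys" by (simp add: ins_def dd piece_def)
    then show ?thesis using rem_split[OF mx2 mNe, of ys] hy 3 dd by auto
  next
    case 4
    then have "ins N m d = (xs @ [N]) @ m # N # ys" by (simp add: ins_def dd piece_def)
    then show ?thesis using rem_split[OF mx2 mNe, of "N # ys"] 4 dd by auto
  qed
qed

lemma rem_props:
  assumes c: "c \<in> cfg N (insert m A) h" and mA: "\<forall>a\<in>A. a < m" and mN: "m < N"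
  shows "ins N m (rem N m c) = c \<and> rem N m c \<in> Dom N A h"
proof -
  have mNe: "m \<noteq> N" using mN by simp
  have mA': "m \<notin> A" using mA by auto
  obtain xs ys where cs: "c = xs @ m # ys" and mx: "m \<notin> set xs" and my: "m \<notin> set ys" and xne: "xs \<noteq> []"
    using cfg_split[OF c] by blast
  have hc: "hd c = N" and nc: "nonn N c" and dc: "distinct (filter (\<lambda>x. x \<noteq> N) c)"
    and sc: "set (filter (\<lambda>x. x \<noteq> N) c) = insert m A" and cc: "cnt N c = Suc h"
    using c unfolding cfg_def by auto
  have hx: "hd xs = N" using hc cs xne by simp
  have nx: "nonn N xs" and ny: "nonn N ys" using nc cs mNe by (auto simp: nonn_append nonn_Cons)
  define fx where "fx = filter (\<lambda>x. x \<noteq> N) xs"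
  define fy where "fy = filter (\<lambda>x. x \<noteq> N) ys"
  have fc: "filter (\<lambda>x. x \<noteq> N) c = fx @ m # fy" using cs mNe by (simp add: fx_def fy_def)
  have mfx: "m \<notin> set fx" "m \<notin> set fy" using mx my by (auto simp: fx_def fy_def)
  have dxy: "distinct (fx @ fy)" using dc fc by simp
  have sxy: "set (fx @ fy) = A" using sc fc mfx mA' by auto
  have cxy: "cnt N xs + cnt N ys = Suc h" using cc cs mNe by simp
  have R: "rem N m c = (if last xs = N then (if ys \<noteq> [] \<and> hd ys = N then (3, butlast xs, tl ys) else (2, butlast xs, ys))
     else (if ys \<noteq> [] \<and> hd ys = N then (1, xs, tl ys) else (0, xs, ys)))"
    using rem_split[OF mx mNe] cs by simp
  show ?thesis
  proof (cases "last xs = N")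
    case lN: True
    obtain xs1 where x1: "xs = xs1 @ [N]" using lN xne by (metis append_butlast_last_id)
    have nx1: "nonn N xs1" and lx1: "xs1 \<noteq> [] \<Longrightarrow> last xs1 \<noteq> N" using nx x1 by (auto simp: nonn_append)
    have hx1: "hd (xs1 @ N # zs) = N" for zs using hx x1 by (cases xs1) auto
    have fx1: "filter (\<lambda>x. x \<noteq> N) xs1 = fx" using x1 by (simp add: fx_def)
    show ?thesis
    proof (cases "ys \<noteq> [] \<and> hd ys = N")
      case True
      obtain ys1 where y1: "ys = N # ys1" using True by (cases ys) auto
      have ny1: "nonn N (N # ys1)" using ny y1 by simp
      have fy1: "filter (\<lambda>x. x \<noteq> N) ys1 = fy" using y1 by (simp add: fy_def)
      have rr: "rem N m c = (3, xs1, ys1)" using R lN True x1 y1 by simp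
      have h1: "1 \<le> h" using cxy x1 y1 by simp
      have c': "xs1 @ N # ys1 \<in> cfg N A (hh 3 h)"
      proof (rule cfgI)
        show "nonn N (xs1 @ N # ys1)" using nx1 lx1 ny1 by (auto simp: nonn_append)
        show "distinct (filter (\<lambda>x. x \<noteq> N) (xs1 @ N # ys1))" using dxy fx1 fy1 by simp
        show "set (filter (\<lambda>x. x \<noteq> N) (xs1 @ N # ys1)) = A" using sxy fx1 fy1 by simp
        show "cnt N (xs1 @ N # ys1) = Suc (hh 3 h)" using cxy x1 y1 h1 by (simp add: hh_def)
      qed (use hx1 in auto)
      have "ins N m (rem N m c) = c" using rr cs x1 y1 by (simp add: ins_def piece_def)
      moreover have "rem N m c \<in> Dom N A h" using rr c' h1 by (simp add: Dom_def)
      ultimately show ?thesis by simp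
    next
      case False
      have rr: "rem N m c = (2, xs1, ys)" using R lN False x1 by simp
      have c': "xs1 @ N # ys \<in> cfg N A (hh 2 h)"
      proof (rule cfgI)
        show "nonn N (xs1 @ N # ys)" using nx1 lx1 ny False by (auto simp: nonn_append nonn_Cons)
        show "distinct (filter (\<lambda>x. x \<noteq> N) (xs1 @ N # ys))" using dxy fx1 by (simp add: fy_def)
        show "set (filter (\<lambda>x. x \<noteq> N) (xs1 @ N # ys)) = A" using sxy fx1 by (simp add: fy_def)
        show "cnt N (xs1 @ N # ys) = Suc (hh 2 h)" using cxy x1 by (simp add: hh_def)
      qed (use hx1 in auto)
      have "ins N m (rem N m c) = c" using rr cs x1 by (simp add: ins_def piece_def)
      moreover have "rem N m c \<in> Dom N A h" using rr c' by (simp add: Dom_def)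
      ultimately show ?thesis by simp
    qed
  next
    case lN: False
    show ?thesis
    proof (cases "ys \<noteq> [] \<and> hd ys = N")
      case True
      obtain ys1 where y1: "ys = N # ys1" using True by (cases ys) auto
      have ny1: "nonn N (N # ys1)" using ny y1 by simp
      have fy1: "filter (\<lambda>x. x \<noteq> N) ys1 = fy" using y1 by (simp add: fy_def)
      have rr: "rem N m c = (1, xs, ys1)" using R lN True y1 by simp
      have c': "xs @ N # ys1 \<in> cfg N A (hh 1 h)"
      proof (rule cfgI)
        show "nonn N (xs @ N # ys1)" using nx lN ny1 xne by (auto simp: nonn_append)
        show "distinct (filter (\<lambda>x. x \<noteq> N) (xs @ N # ys1))" using dxy fy1 by (simp add: fx_def)
        show "set (filter (\<lambda>x. x \<noteq> N) (xs @ N # ys1)) = A" using sxy fy1 by (simp add: fx_def)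
        show "cnt N (xs @ N # ys1) = Suc (hh 1 h)" using cxy y1 by (simp add: hh_def)
      qed (use hx xne in auto)
      have "ins N m (rem N m c) = c" using rr cs y1 by (simp add: ins_def piece_def)
      moreover have "rem N m c \<in> Dom N A h" using rr c' xne by (simp add: Dom_def)
      ultimately show ?thesis by simp
    next
      case False
      have rr: "rem N m c = (0, xs, ys)" using R lN False by simp
      have c': "xs @ N # ys \<in> cfg N A (hh 0 h)"
      proof (rule cfgI)
        show "nonn N (xs @ N # ys)" using nx lN ny False xne by (auto simp: nonn_append nonn_Cons)
        show "distinct (filter (\<lambda>x. x \<noteq> N) (xs @ N # ys))" using dxy by (simp add: fx_def fy_def)
        show "set (filter (\<lambda>x. x \<noteq> N) (xs @ N # ys)) = A" using sxy by (simp add: fx_def fy_def)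
        show "cnt N (xs @ N # ys) = Suc (hh 0 h)" using cxy by (simp add: hh_def)
      qed (use hx xne in auto)
      have "ins N m (rem N m c) = c" using rr cs by (simp add: ins_def piece_def)
      moreover have "rem N m c \<in> Dom N A h" using rr c' xne by (simp add: Dom_def)
      ultimately show ?thesis by simp
    qed
  qed
qed

lemma bij_ins:
  assumes mA: "\<forall>a\<in>A. a < m" and mN: "m < N"
  shows "bij_betw (ins N m) (Dom N A h) (cfg N (insert m A) h)"
proof (rule bij_betw_byWitness[where f'="rem N m"])
  show "\<forall>a\<in>Dom N A h. rem N m (ins N m a) = a" using rem_ins[OF _ mA mN] by blast
  show "\<forall>a'\<in>cfg N (insert m A) h. ins N m (rem N m a') = a'" using rem_props[OF _ mA mN] by blast
  show "ins N m ` Dom N A h \<subseteq> cfg N (insert m A) h" using ins_in_cfg[OF _ mA mN] by blast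
  show "rem N m ` cfg N (insert m A) h \<subseteq> Dom N A h" using rem_props[OF _ mA mN] by blast
qed


lemma finite_cfg: "finite A \<Longrightarrow> finite (cfg N A h)"
proof -
  assume fA: "finite A"
  have "cfg N A h \<subseteq> {c. set c \<subseteq> insert N A \<and> length c = card A + Suc h}"
  proof
    fix c assume c: "c \<in> cfg N A h"
    have d: "distinct (filter (\<lambda>x. x \<noteq> N) c)" and s: "set (filter (\<lambda>x. x \<noteq> N) c) = A"
      and k: "cnt N c = Suc h" using c unfolding cfg_def by auto
    have l1: "length (filter (\<lambda>x. x \<noteq> N) c) = card A" using distinct_card[OF d] s by simp
    have "length (filter (\<lambda>x. x \<noteq> N) c) + length (filter (\<lambda>x. \<not> x \<noteq> N) c) = length c"
      by (rule sum_length_filter_compl)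
    then have "length c = card A + Suc h" using l1 k by (simp add: cnt_def)
    moreover have "set c \<subseteq> insert N A"
    proof
      fix x assume "x \<in> set c"
      then show "x \<in> insert N A" using s by (cases "x = N") auto
    qed
    ultimately show "c \<in> {c. set c \<subseteq> insert N A \<and> length c = card A + Suc h}" by simp
  qed
  moreover have "finite {c. set c \<subseteq> insert N A \<and> length c = card A + Suc h}"
    using fA by (intro finite_lists_length_eq) simp
  ultimately show ?thesis by (rule finite_subset)
qed

definition holes :: "nat \<Rightarrow> nat list \<Rightarrow> (nat list \<times> nat list) set" where
  "holes N l = {(xs, ys). xs @ N # ys = l}"

lemma holes_Nil: "holes N [] = {}" by (auto simp: holes_def)

lemma holes_Cons: "holes N (a # l) = (if a = N then insert ([], l) else (\<lambda>S. S)) ((\<lambda>(xs, ys). (a # xs, ys)) ` holes N l)"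
proof -
  have E: "(xs, ys) \<in> holes N (a # l) \<longleftrightarrow> (xs = [] \<and> a = N \<and> ys = l) \<or> (\<exists>xs'. xs = a # xs' \<and> (xs', ys) \<in> holes N l)" for xs ys
    by (cases xs) (auto simp: holes_def)
  show ?thesis
  proof (rule set_eqI)
    fix p :: "nat list \<times> nat list"
    obtain xs ys where p: "p = (xs, ys)" by (cases p)
    show "p \<in> holes N (a # l) \<longleftrightarrow> p \<in> (if a = N then insert ([], l) else (\<lambda>S. S)) ((\<lambda>(xs, ys). (a # xs, ys)) ` holes N l)"
      unfolding p E by (cases "a = N") (force simp: image_iff)+
  qed
qed

lemma finite_holes: "finite (holes N l)"
  by (induction l) (auto simp: holes_Nil holes_Cons)

lemma hole_sum: "(\<Sum>p\<in>holes N l. g (cnt N (fst p)) (cnt N (snd p))) = (\<Sum>j<cnt N l. g j (cnt N l - Suc j))"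
proof (induction l arbitrary: g)
  case Nil then show ?case by (simp add: holes_Nil)
next
  case (Cons a l)
  have inj: "inj_on (\<lambda>(xs, ys). (a # xs, ys)) (holes N l)" by (auto simp: inj_on_def)
  have img: "(\<Sum>p\<in>(\<lambda>(xs, ys). (a # xs, ys)) ` holes N l. g (cnt N (fst p)) (cnt N (snd p)))
     = (\<Sum>p\<in>holes N l. g (cnt N (a # fst p)) (cnt N (snd p)))"
    by (subst sum.reindex[OF inj]) (simp add: case_prod_beta)
  show ?case
  proof (cases "a = N")
    case True
    have ni: "([], l) \<notin> (\<lambda>(xs, ys). (a # xs, ys)) ` holes N l" by auto
    have "(\<Sum>p\<in>holes N (a # l). g (cnt N (fst p)) (cnt N (snd p)))
        = g 0 (cnt N l) + (\<Sum>p\<in>holes N l. g (Suc (cnt N (fst p))) (cnt N (snd p)))"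
      using True ni img finite_holes[of N l] by (simp add: holes_Cons)
    also have "\<dots> = g 0 (cnt N l) + (\<Sum>j<cnt N l. g (Suc j) (cnt N l - Suc j))"
      using Cons.IH[of "\<lambda>j r. g (Suc j) r"] by simp
    also have "\<dots> = (\<Sum>j<Suc (cnt N l). g j (Suc (cnt N l) - Suc j))"
      by (simp only: sum.lessThan_Suc_shift) simp
    finally show ?thesis using True by simp
  next
    case False
    have "(\<Sum>p\<in>holes N (a # l). g (cnt N (fst p)) (cnt N (snd p)))
        = (\<Sum>p\<in>holes N l. g (cnt N (fst p)) (cnt N (snd p)))"
      using False img by (simp add: holes_Cons)
    then show ?thesis using Cons.IH[of g] False by simp
  qed
qed

lemma hole_sum_ne:
  assumes "l \<noteq> []" "hd l = N"
  shows "(\<Sum>p\<in>{p\<in>holes N l. fst p \<noteq> []}. g (cnt N (fst p)) (cnt N (snd p)))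
     = (\<Sum>j<cnt N l. if j = 0 then 0 else g j (cnt N l - Suc j))"
proof -
  have e: "fst p \<noteq> [] \<longleftrightarrow> cnt N (fst p) \<noteq> 0" if pin: "p \<in> holes N l" for p
  proof -
    obtain xs ys where p: "p = (xs, ys)" and l: "xs @ N # ys = l" using pin by (cases p) (auto simp: holes_def)
    show ?thesis
    proof (cases xs)
      case Nil then show ?thesis using p by simp
    next
      case (Cons b xs')
      then have "b = N" using l assms by auto
      then show ?thesis using p Cons by simp
    qed
  qed
  have "(\<Sum>p\<in>{p\<in>holes N l. fst p \<noteq> []}. g (cnt N (fst p)) (cnt N (snd p)))
      = (\<Sum>p\<in>holes N l. if fst p \<noteq> [] then g (cnt N (fst p)) (cnt N (snd p)) else 0)"
    by (rule sum.inter_filter[OF finite_holes])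
  also have "\<dots> = (\<Sum>p\<in>holes N l. (\<lambda>j r. if j = 0 then 0 else g j r) (cnt N (fst p)) (cnt N (snd p)))"
    by (rule sum.cong) (use e in auto)
  also have "\<dots> = (\<Sum>j<cnt N l. if j = 0 then 0 else g j (cnt N l - Suc j))"
    by (rule hole_sum)
  finally show ?thesis .
qed


definition Dt :: "nat \<Rightarrow> nat set \<Rightarrow> nat \<Rightarrow> nat \<Rightarrow> (nat list \<times> nat list) set" where
  "Dt N A h t = {(xs, ys). xs @ N # ys \<in> cfg N A (hh t h) \<and> (t < 2 \<longrightarrow> xs \<noteq> []) \<and> (t = 3 \<longrightarrow> 1 \<le> h)}"

lemma Dom_Sigma: "Dom N A h = (SIGMA t:{..<4}. Dt N A h t)"
  unfolding Dom_def Dt_def by auto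

lemma DEC:
  fixes \<Phi> :: "nat \<Rightarrow> 'a::comm_monoid_add"
  assumes fA: "finite A" and mA: "\<forall>a\<in>A. a < m" and mN: "m < N"
  shows "(\<Sum>c\<in>cfg N (insert m A) h. \<Phi> (stc N c)) =
    (\<Sum>t<4. if t = 3 \<and> h = 0 then 0 else
        \<Sum>c'\<in>cfg N A (hh t h). \<Sum>j<Suc (hh t h). if t < 2 \<and> j = 0 then 0 else \<Phi> (stc N c' + wgt t j (hh t h - j)))"
proof -
  note bij = bij_ins[OF mA mN, of h]
  have fD: "finite (Dom N A h)" using bij_betw_finite[OF bij] finite_cfg[OF finite_insert[THEN iffD2, OF fA]] by simp
  define F where "F = (\<lambda>t p. \<Phi> (stc N (fst p @ N # snd p) + wgt t (cnt N (fst p)) (cnt N (snd p))))"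
  have S1: "(\<Sum>c\<in>cfg N (insert m A) h. \<Phi> (stc N c)) = (\<Sum>d\<in>Dom N A h. \<Phi> (stc N (ins N m d)))"
    using sum.reindex_bij_betw[OF bij, of "\<lambda>c. \<Phi> (stc N c)"] by simp
  have S2: "(\<Sum>d\<in>Dom N A h. \<Phi> (stc N (ins N m d))) = (\<Sum>d\<in>Dom N A h. case_prod F d)"
  proof (rule sum.cong)
    fix d assume d: "d \<in> Dom N A h"
    obtain t xs ys where dd: "d = (t, xs, ys)" by (cases d) auto
    have c': "xs @ N # ys \<in> cfg N A (hh t h)" and t2: "t < 2 \<Longrightarrow> xs \<noteq> []" using d unfolding Dom_def dd by auto
    have sc: "small N m (xs @ N # ys)" using small_of_cfg[OF c' mA] .
    have sx: "small N m xs" and sy: "small N m ys" using sc by (auto simp: small_def)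
    have nn: "nonn N (xs @ N # ys)" using c' unfolding cfg_def by simp
    have hx: "xs \<noteq> [] \<Longrightarrow> hd xs = N" using c' unfolding cfg_def by (cases xs) auto
    show "\<Phi> (stc N (ins N m d)) = case_prod F d"
      using ins_stc[OF mN sx sy nn hx t2] unfolding dd ins_def F_def by simp
  qed simp
  have fDt: "\<forall>t\<in>{..<4}. finite (Dt N A h t)"
  proof
    fix t :: nat assume t: "t \<in> {..<4}"
    have "Dt N A h t \<subseteq> snd ` Dom N A h"
    proof
      fix p assume "p \<in> Dt N A h t"
      then have "(t, p) \<in> Dom N A h" using t unfolding Dom_Sigma by auto
      then show "p \<in> snd ` Dom N A h" by force
    qed
    then show "finite (Dt N A h t)" using fD finite_surj by blast
  qed
  have S3: "(\<Sum>d\<in>Dom N A h. case_prod F d) = (\<Sum>t<4. \<Sum>p\<in>Dt N A h t. F t p)"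
    unfolding Dom_Sigma using sum.Sigma[OF _ fDt, of F] by simp
  have S4: "(\<Sum>p\<in>Dt N A h t. F t p) = (if t = 3 \<and> h = 0 then 0 else
        \<Sum>c'\<in>cfg N A (hh t h). \<Sum>j<Suc (hh t h). if t < 2 \<and> j = 0 then 0 else \<Phi> (stc N c' + wgt t j (hh t h - j)))"
    if t4: "t < 4" for t
  proof (cases "t = 3 \<and> h = 0")
    case True
    then have "Dt N A h t = {}" unfolding Dt_def by auto
    then show ?thesis using True by simp
  next
    case False
    define T where "T = cfg N A (hh t h)"
    have fT: "finite T" unfolding T_def using finite_cfg[OF fA] .
    have fS: "finite (Dt N A h t)" using fDt t4 by simp
    have sub: "(\<lambda>p. fst p @ N # snd p) ` Dt N A h t \<subseteq> T" unfolding Dt_def T_def by auto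
    have G: "(\<Sum>p\<in>Dt N A h t. F t p) = (\<Sum>c'\<in>T. \<Sum>p\<in>{p. p \<in> Dt N A h t \<and> fst p @ N # snd p = c'}. F t p)"
      using sum.group[OF fS fT sub, of "F t"] by simp
    have inner: "(\<Sum>p\<in>{p. p \<in> Dt N A h t \<and> fst p @ N # snd p = c'}. F t p)
        = (\<Sum>j<Suc (hh t h). if t < 2 \<and> j = 0 then 0 else \<Phi> (stc N c' + wgt t j (hh t h - j)))"
      if c': "c' \<in> T" for c'
    proof -
      have cc: "cnt N c' = Suc (hh t h)" and cne: "c' \<noteq> []" and ch: "hd c' = N"
        using c' unfolding T_def cfg_def by auto
      have Fe: "F t p = \<Phi> (stc N c' + wgt t (cnt N (fst p)) (cnt N (snd p)))" if "p \<in> holes N c'" for p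
        using that unfolding F_def holes_def by auto
      show ?thesis
      proof (cases "t < 2")
        case True
        have set_eq: "{p. p \<in> Dt N A h t \<and> fst p @ N # snd p = c'} = {p \<in> holes N c'. fst p \<noteq> []}"
          using c' True False unfolding Dt_def holes_def T_def by auto
        have "(\<Sum>p\<in>{p \<in> holes N c'. fst p \<noteq> []}. F t p)
           = (\<Sum>p\<in>{p \<in> holes N c'. fst p \<noteq> []}. \<Phi> (stc N c' + wgt t (cnt N (fst p)) (cnt N (snd p))))"
          by (rule sum.cong) (use Fe in auto)
        also have "\<dots> = (\<Sum>j<cnt N c'. if j = 0 then 0 else \<Phi> (stc N c' + wgt t j (cnt N c' - Suc j)))"
          by (rule hole_sum_ne[OF cne ch])
        finally have X: "(\<Sum>p\<in>{p \<in> holes N c'. fst p \<noteq> []}. F t p) = (\<Sum>j<cnt N c'. if j = 0 then 0 else \<Phi> (stc N c' + wgt t j (cnt N c' - Suc j)))" .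
        show ?thesis unfolding set_eq X cc using True by (intro sum.cong refl) simp
      next
        case f2: False
        have set_eq: "{p. p \<in> Dt N A h t \<and> fst p @ N # snd p = c'} = holes N c'"
          using c' f2 False unfolding Dt_def holes_def T_def by auto
        have "(\<Sum>p\<in>holes N c'. F t p)
           = (\<Sum>p\<in>holes N c'. \<Phi> (stc N c' + wgt t (cnt N (fst p)) (cnt N (snd p))))"
          by (rule sum.cong) (use Fe in auto)
        also have "\<dots> = (\<Sum>j<cnt N c'. \<Phi> (stc N c' + wgt t j (cnt N c' - Suc j)))"
          by (rule hole_sum)
        finally have X: "(\<Sum>p\<in>holes N c'. F t p) = (\<Sum>j<cnt N c'. \<Phi> (stc N c' + wgt t j (cnt N c' - Suc j)))" .
        show ?thesis unfolding set_eq X cc using f2 by simp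
      qed
    qed
    have H: "(\<Sum>p\<in>Dt N A h t. F t p) = (\<Sum>c'\<in>T. \<Sum>j<Suc (hh t h). if t < 2 \<and> j = 0 then 0 else \<Phi> (stc N c' + wgt t j (hh t h - j)))"
      unfolding G by (rule sum.cong[OF refl inner])
    show ?thesis unfolding H T_def using False by (simp only: if_False)
  qed
  show ?thesis using S1 S2 S3 S4 by simp
qed


definition GG :: "'a::comm_ring_1 \<Rightarrow> nat \<Rightarrow> nat set \<Rightarrow> nat \<Rightarrow> 'a" where
  "GG q N A h = (\<Sum>c\<in>cfg N A h. q ^ (stc N c - 1))"

lemma stc_pos:
  assumes c: "c \<in> cfg N A h" and ne: "A \<noteq> {}" and AN: "\<forall>a\<in>A. a < N"
  shows "1 \<le> stc N c"
proof -
  have cne: "c \<noteq> []" and hc: "hd c = N" and nc: "nonn N c" and sc: "set (filter (\<lambda>x. x \<noteq> N) c) = A"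
    using c unfolding cfg_def by auto
  obtain c1 where c1: "c = N # c1" using cne hc by (cases c) auto
  have "c1 \<noteq> []"
  proof
    assume "c1 = []"
    then have "set (filter (\<lambda>x. x \<noteq> N) c) = {}" using c1 by simp
    then show False using sc ne by simp
  qed
  then obtain x rest where xr: "c1 = x # rest" by (cases c1) auto
  have xN: "x \<noteq> N" using nc c1 xr by simp
  have "x \<in> A" using sc c1 xr xN by auto
  then have xl: "x < N" using AN by simp
  have "stc N c = wt N [N] x rest + ssum (wt N) [N, x] rest"
    unfolding stc_def c1 xr by (simp add: wt_def)
  moreover have "wt N [N] x rest \<ge> 1" using xN xl by (simp add: wt_def)
  ultimately show ?thesis by simp
qed

lemma W01: "(\<Sum>j<Suc k. if j = 0 then 0 else (q::'a::comm_ring_1) ^ (2 * (j - 1) + (k - j))) = q ^ (k - 1) * qint q k"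
proof -
  have "(\<Sum>j<Suc k. if j = 0 then 0 else q ^ (2 * (j - 1) + (k - j))) = (\<Sum>i<k. q ^ (2 * i + (k - Suc i)))"
    by (simp only: sum.lessThan_Suc_shift) simp
  also have "\<dots> = (\<Sum>i<k. q ^ (k - 1) * q ^ i)"
  proof (rule sum.cong)
    fix i assume "i \<in> {..<k}"
    then have e: "2 * i + (k - Suc i) = (k - 1) + i" by auto
    show "q ^ (2 * i + (k - Suc i)) = q ^ (k - 1) * q ^ i" unfolding e by (simp only: power_add)
  qed simp
  also have "\<dots> = q ^ (k - 1) * qint q k" by (simp only: qint_def sum_distrib_left)
  finally show ?thesis .
qed

lemma W23: "(\<Sum>j<Suc k. (q::'a::comm_ring_1) ^ Suc (2 * j + (k - j))) = q ^ Suc k * qint q (Suc k)"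
proof -
  have "(\<Sum>j<Suc k. q ^ Suc (2 * j + (k - j))) = (\<Sum>j<Suc k. q ^ Suc k * q ^ j)"
  proof (rule sum.cong)
    fix j assume "j \<in> {..<Suc k}"
    then have e: "Suc (2 * j + (k - j)) = Suc k + j" by auto
    show "q ^ Suc (2 * j + (k - j)) = q ^ Suc k * q ^ j" unfolding e by (simp only: power_add)
  qed simp
  also have "\<dots> = q ^ Suc k * qint q (Suc k)" by (simp only: qint_def sum_distrib_left)
  finally show ?thesis .
qed

lemma GG_DEC:
  assumes fA: "finite A" and mA: "\<forall>a\<in>A. a < m" and mN: "m < N"
  shows "GG q N (insert m A) h = (\<Sum>t<4. if t = 3 \<and> h = 0 then 0 else
        \<Sum>c'\<in>cfg N A (hh t h). \<Sum>j<Suc (hh t h). if t < 2 \<and> j = 0 then 0 else q ^ (stc N c' + wgt t j (hh t h - j) - 1))"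
  unfolding GG_def by (rule DEC[OF fA mA mN])

lemma GG_rec:
  assumes fA: "finite A" and ne: "A \<noteq> {}" and mA: "\<forall>a\<in>A. a < m" and mN: "m < N"
  shows "GG q N (insert m A) h = Dw q (Suc h) * GG q N A (Suc h) + (Dw q h + Uw q h) * GG q N A h
           + (if h = 0 then 0 else Uw q (h - 1) * GG q N A (h - 1))"
proof -
  have AN: "\<forall>a\<in>A. a < N" using mA mN by auto
  define W where "W t k = (\<Sum>j<Suc k. if t < 2 \<and> j = 0 then 0 else q ^ wgt t j (k - j))" for t k
  have inner: "(\<Sum>c'\<in>cfg N A k. \<Sum>j<Suc k. if t < 2 \<and> j = 0 then 0 else q ^ (stc N c' + wgt t j (k - j) - 1))
      = GG q N A k * W t k" for t k
  proof -
    have "(\<Sum>j<Suc k. if t < 2 \<and> j = 0 then 0 else q ^ (stc N c' + wgt t j (k - j) - 1)) = q ^ (stc N c' - 1) * W t k"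
      if c': "c' \<in> cfg N A k" for c'
    proof -
      have p: "1 \<le> stc N c'" using stc_pos[OF c' ne AN] .
      have "q ^ (stc N c' + w - 1) = q ^ (stc N c' - 1) * q ^ w" for w
        using p by (simp add: power_add[symmetric])
      then show ?thesis unfolding W_def sum_distrib_left by (intro sum.cong refl) simp
    qed
    then show ?thesis unfolding GG_def sum_distrib_right by (rule sum.cong[OF refl])
  qed
  have Wlt: "W t k = (\<Sum>j<Suc k. if j = 0 then 0 else q ^ (2 * (j - 1) + (k - j)))" if "t < 2" for t k
    unfolding W_def wgt_def using that by (intro sum.cong refl) simp
  have Wge: "W t k = (\<Sum>j<Suc k. q ^ Suc (2 * j + (k - j)))" if "\<not> t < 2" for t k
    unfolding W_def wgt_def using that by (intro sum.cong refl) simp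
  have W0: "W 0 (Suc h) = Dw q (Suc h)" unfolding Dw_def
    apply (subst Wlt) apply simp apply (rule W01) done
  have W1: "W 1 h = Dw q h" unfolding Dw_def
    apply (subst Wlt) apply simp apply (rule W01) done
  have W2: "W 2 h = Uw q h" unfolding Uw_def
    apply (subst Wge) apply simp apply (rule W23) done
  have W3: "W 3 (h - 1) = Uw q (h - 1)" unfolding Uw_def
    apply (subst Wge) apply simp apply (rule W23) done
  have "GG q N (insert m A) h = (\<Sum>t<4. if t = 3 \<and> h = 0 then 0 else GG q N A (hh t h) * W t (hh t h))"
    unfolding GG_DEC[OF fA mA mN] inner ..
  also have "\<dots> = GG q N A (Suc h) * W 0 (Suc h) + GG q N A h * W 1 h + GG q N A h * W 2 h
       + (if h = 0 then 0 else GG q N A (h - 1) * W 3 (h - 1))"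
    by (simp add: numeral_eq_Suc hh_def)
  finally show ?thesis unfolding W0 W1 W2 W3 by (simp add: algebra_simps)
qed


lemma cfg_empty: "cfg N {} h = (if h = 0 then {[N]} else {})"
proof -
  have "c \<in> cfg N {} h \<longleftrightarrow> h = 0 \<and> c = [N]" for c
  proof
    assume c: "c \<in> cfg N {} h"
    have cne: "c \<noteq> []" and hc: "hd c = N" and nc: "nonn N c" and sc: "set (filter (\<lambda>x. x \<noteq> N) c) = {}"
      and cc: "cnt N c = Suc h" using c unfolding cfg_def mem_Collect_eq by blast+
    obtain c1 where c1: "c = N # c1" using cne hc by (cases c) auto
    have "filter (\<lambda>x. x \<noteq> N) c = []" using sc by (simp only: set_empty)
    then have allN: "\<forall>x\<in>set c. x = N" by (simp add: filter_empty_conv)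
    have "c1 = []"
    proof (rule ccontr)
      assume "c1 \<noteq> []"
      then obtain y r where yr: "c1 = y # r" by (cases c1) auto
      then have "y \<in> set c" using c1 by simp
      then have "y = N" using allN by blast
      then show False using nc c1 yr by simp
    qed
    then show "h = 0 \<and> c = [N]" using cc c1 by simp
  next
    assume "h = 0 \<and> c = [N]"
    then have "c = [N]" "h = 0" by auto
    then show "c \<in> cfg N {} h" unfolding cfg_def by simp
  qed
  then show ?thesis by (intro set_eqI) simp
qed

lemma GG_single:
  assumes mN: "m < N"
  shows "GG q N {m} h = Gc q 1 h"
proof -
  have stcN: "stc N [N] = 0" by (simp add: stc_def wt_def)
  have D: "GG q N (insert m {}) h = (\<Sum>t<4. if t = 3 \<and> h = 0 then 0 else
        \<Sum>c'\<in>cfg N {} (hh t h). \<Sum>j<Suc (hh t h). if t < 2 \<and> j = 0 then 0 else q ^ (stc N c' + wgt t j (hh t h - j) - 1))"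
    by (rule GG_DEC) (use mN in auto)
  consider "h = 0" | "h = 1" | "h \<ge> 2" by linarith
  then show ?thesis
  proof cases
    case 1
    then show ?thesis using D Gc_1(1) by (simp add: numeral_eq_Suc hh_def cfg_empty stcN wgt_def)
  next
    case 2
    then show ?thesis using D Gc_1(2) by (simp add: numeral_eq_Suc hh_def cfg_empty stcN wgt_def)
  next
    case 3
    then show ?thesis using D Gc_1(3)[OF 3] by (simp add: numeral_eq_Suc hh_def cfg_empty)
  qed
qed

lemma GG_main: "1 \<le> k \<Longrightarrow> k < N \<Longrightarrow> GG q N {1..k} h = Gc q k h"
proof (induction k arbitrary: h)
  case 0 then show ?case by simp
next
  case (Suc k)
  show ?case
  proof (cases "k = 0")
    case True
    then show ?thesis using GG_single[of 1 N q h] Suc.prems by simp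
  next
    case False
    have e: "{1..Suc k} = insert (Suc k) {1..k}" by auto
    have IH: "GG q N {1..k} h' = Gc q k h'" for h' using Suc.IH[of h'] Suc.prems False by simp
    have "GG q N {1..Suc k} h = Dw q (Suc h) * GG q N {1..k} (Suc h) + (Dw q h + Uw q h) * GG q N {1..k} h
           + (if h = 0 then 0 else Uw q (h - 1) * GG q N {1..k} (h - 1))"
      unfolding e by (rule GG_rec) (use False Suc.prems in auto)
    then show ?thesis using IH Gc_rec[of k q h] False by simp
  qed
qed

theorem theorem3:
  fixes q :: "'a::comm_ring_1" and n :: nat
  assumes "n \<ge> 1"
  shows "(\<Sum>w\<in>permutations_of_set {1..n}. q ^ (run w - 1 + 2 * lsg w + rsg w)) = qfact q n"
proof -
  define N where "N = Suc n"
  have bij: "bij_betw (\<lambda>w. N # w) (permutations_of_set {1..n}) (cfg N {1..n} 0)"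
  proof (rule bij_betw_byWitness[where f'=tl])
    show "\<forall>a\<in>permutations_of_set {1..n}. tl (N # a) = a" by simp
    show "\<forall>a'\<in>cfg N {1..n} 0. N # tl a' = a'"
    proof
      fix c assume "c \<in> cfg N {1..n} 0"
      then have "c \<noteq> []" "hd c = N" unfolding cfg_def by auto
      then show "N # tl c = c" by (cases c) auto
    qed
    show "(\<lambda>w. N # w) ` permutations_of_set {1..n} \<subseteq> cfg N {1..n} 0"
    proof
      fix c assume "c \<in> (\<lambda>w. N # w) ` permutations_of_set {1..n}"
      then obtain w where c: "c = N # w" and w: "w \<in> permutations_of_set {1..n}" by auto
      have sw: "set w = {1..n}" and dw: "distinct w" using w by (auto simp: permutations_of_set_def)
      have Nw: "N \<notin> set w" using sw by (auto simp: N_def)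
      have "\<forall>x\<in>set w. x \<noteq> N" using Nw by blast
      then have fw: "filter (\<lambda>x. x \<noteq> N) w = w" by (simp add: filter_id_conv)
      have cw: "cnt N w = 0" using \<open>\<forall>x\<in>set w. x \<noteq> N\<close> by (simp add: cnt_def filter_empty_conv)
      have nw: "nonn N (N # w)"
      proof -
        have "nonn N l" if "N \<notin> set l" for l using that by (induction N l rule: nonn.induct) auto
        then have "nonn N w" using Nw .
        then show ?thesis using Nw by (cases w) (auto simp: nonn_Cons)
      qed
      have f2: "filter (\<lambda>x. x \<noteq> N) (N # w) = w" using fw by simp
      show "c \<in> cfg N {1..n} 0" unfolding c
        by (rule cfgI) (simp_all only: f2 sw dw nw, simp_all add: cw)
    qed
    show "tl ` cfg N {1..n} 0 \<subseteq> permutations_of_set {1..n}"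
    proof
      fix w assume "w \<in> tl ` cfg N {1..n} 0"
      then obtain c where w: "w = tl c" and c: "c \<in> cfg N {1..n} 0" by auto
      have "c \<noteq> []" "hd c = N" and cc: "cnt N c = 1" and dc: "distinct (filter (\<lambda>x. x \<noteq> N) c)"
        and sc: "set (filter (\<lambda>x. x \<noteq> N) c) = {1..n}" using c unfolding cfg_def by auto
      then have c1: "c = N # w" using w by (cases c) auto
      have "cnt N w = 0" using cc c1 by simp
      then have "\<forall>x\<in>set w. x \<noteq> N" by (simp add: cnt_def filter_empty_conv)
      then have fw: "filter (\<lambda>x. x \<noteq> N) w = w" by (simp add: filter_id_conv)
      show "w \<in> permutations_of_set {1..n}" using dc sc c1 fw by (simp add: permutations_of_set_def)
    qed
  qed
  have "(\<Sum>w\<in>permutations_of_set {1..n}. q ^ (run w - 1 + 2 * lsg w + rsg w))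
      = (\<Sum>w\<in>permutations_of_set {1..n}. q ^ (stc N (N # w) - 1))"
  proof (rule sum.cong)
    fix w assume w: "w \<in> permutations_of_set {1..n}"
    have sw: "set w = {1..n}" and dw: "distinct w" using w by (auto simp: permutations_of_set_def)
    have wne: "w \<noteq> []" using sw assms by auto
    have wl: "\<forall>x\<in>set w. x < N" using sw by (auto simp: N_def)
    show "q ^ (run w - 1 + 2 * lsg w + rsg w) = q ^ (stc N (N # w) - 1)"
      using stc_perm[OF dw wne wl] by simp
  qed simp
  also have "\<dots> = GG q N {1..n} 0"
    unfolding GG_def using sum.reindex_bij_betw[OF bij, of "\<lambda>c. q ^ (stc N c - 1)"] by simp
  also have "\<dots> = Gc q n 0" using GG_main[of n N q 0] assms by (simp add: N_def)
  also have "\<dots> = qfact q n" using Gc_n0 assms by simp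
  finally show ?thesis .
qed


end
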